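(* Let $\varphi:\Lambda\to\Gamma$ be a regular covering map of finite simplicial graphs. For every vertex $v$ of $\Gamma$ and every connected component $B$ of $\Gamma\setminus\mathrm{st}(v)$, the partial conjugation $P^v_{\bar B}$ is liftable.
   Context: Graphs are finite simplicial graphs; subgraphs are induced. $A_\Gamma$ is the right-angled Artin group with generators $V\Gamma$ and relations $[u,w]=1$ for edges. $\mathrm{lk}(v)$ is induced by the neighbours of $v$, $\mathrm{st}(v)$ by $\mathrm{lk}(v)\cup\{v\}$. A covering map $\varphi:\Lambda\to\Gamma$ is a surjective simplicial map mapping the neighbours of each vertex $u$ bijectively onto the neighbours of $\varphi(u)$; regular means the group of graph automorphisms $\mu$ of $\Lambda$ with $\varphi\mu=\varphi$ acts transitively on each fiber. $\phi:A_\Lambda\to A_\Gamma$ is induced by $\varphi$; $f\in\mathrm{Aut}(A_\Gamma)$ is liftable if there is $F\in\mathrm{Aut}(A_\Lambda)$ with $f\circ\phi=\phi\circ F$. For a union $C$ of components of $\Gamma\setminus\mathrm{st}(v)$, $P^v_C$ sends each vertex $w$ of $C$ to $vwv^{-1}$ and fixes other vertices. For a vertex $u$ of $\Lambda$ and a connected subgraph $A$ of $\Lambda$ disjoint from $\mathrm{st}(u)$, $C(u,A)$ is the component of $\Lambda\setminus\mathrm{st}(u)$ containing $A$. For a component $B$ of $\Gamma\setminus\mathrm{st}(v)$, pick a component $\tilde B$ of $\varphi^{-1}(B)$ and set $\bar B=\varphi\big(\bigcap_{u\in\varphi^{-1}(v)}C(u,\tilde B)\big)$; this is independent of the choice of $\tilde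 B$ and is a union of components of $\Gamma\setminus\mathrm{st}(v)$ containing $B$. *)

theory Defs
  imports "HOL-Algebra.Group"
begin

definition simple_graph :: "'v set \<Rightarrow> ('v \<Rightarrow> 'v \<Rightarrow> bool) \<Rightarrow> bool" where
  "simple_graph V E \<longleftrightarrow> finite V \<and> (\<forall>x y. E x y \<longrightarrow> x \<in> V \<and> y \<in> V)
     \<and> (\<forall>x y. E x y \<longrightarrow> E y x) \<and> (\<forall>x. \<not> E x x)"

definition lk :: "'v set \<Rightarrow> ('v \<Rightarrow> 'v \<Rightarrow> bool) \<Rightarrow> 'v \<Rightarrow> 'v set" where
  "lk V E v = {w \<in> V. E v w}"

definition st :: "'v set \<Rightarrow> ('v \<Rightarrow> 'v \<Rightarrow> bool) \<Rightarrow> 'v \<Rightarrow> 'v set" where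
  "st V E v = insert v (lk V E v)"

definition reach_in :: "'v set \<Rightarrow> ('v \<Rightarrow> 'v \<Rightarrow> bool) \<Rightarrow> 'v \<Rightarrow> 'v \<Rightarrow> bool" where
  "reach_in S E = (\<lambda>a b. a \<in> S \<and> b \<in> S \<and> E a b)\<^sup>*\<^sup>*"

definition component :: "'v set \<Rightarrow> ('v \<Rightarrow> 'v \<Rightarrow> bool) \<Rightarrow> 'v set \<Rightarrow> bool" where
  "component S E K \<longleftrightarrow> (\<exists>x\<in>S. K = {y. reach_in S E x y})"

definition covering_map :: "'a set \<Rightarrow> ('a \<Rightarrow> 'a \<Rightarrow> bool) \<Rightarrow> 'b set \<Rightarrow> ('b \<Rightarrow> 'b \<Rightarrow> bool)
     \<Rightarrow> ('a \<Rightarrow> 'b) \<Rightarrow> bool" where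
  "covering_map VL EL VG EG \<phi> \<longleftrightarrow> \<phi> ` VL = VG
     \<and> (\<forall>x y. EL x y \<longrightarrow> EG (\<phi> x) (\<phi> y))
     \<and> (\<forall>u\<in>VL. bij_betw \<phi> (lk VL EL u) (lk VG EG (\<phi> u)))"

definition graph_aut :: "'a set \<Rightarrow> ('a \<Rightarrow> 'a \<Rightarrow> bool) \<Rightarrow> ('a \<Rightarrow> 'a) \<Rightarrow> bool" where
  "graph_aut V E \<mu> \<longleftrightarrow> bij_betw \<mu> V V \<and> (\<forall>x\<in>V. \<forall>y\<in>V. E x y \<longleftrightarrow> E (\<mu> x) (\<mu> y))"

definition deck :: "'a set \<Rightarrow> ('a \<Rightarrow> 'a \<Rightarrow> bool) \<Rightarrow> ('a \<Rightarrow> 'b) \<Rightarrow> ('a \<Rightarrow> 'a) set" where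
  "deck VL EL \<phi> = {\<mu>. graph_aut VL EL \<mu> \<and> (\<forall>x\<in>VL. \<phi> (\<mu> x) = \<phi> x)}"

definition regular_covering :: "'a set \<Rightarrow> ('a \<Rightarrow> 'a \<Rightarrow> bool) \<Rightarrow> 'b set \<Rightarrow> ('b \<Rightarrow> 'b \<Rightarrow> bool)
     \<Rightarrow> ('a \<Rightarrow> 'b) \<Rightarrow> bool" where
  "regular_covering VL EL VG EG \<phi> \<longleftrightarrow> covering_map VL EL VG EG \<phi>
     \<and> (\<forall>u\<in>VL. \<forall>u'\<in>VL. \<phi> u = \<phi> u' \<longrightarrow> (\<exists>\<mu>\<in>deck VL EL \<phi>. \<mu> u = u'))"

text \<open>Words are lists of letters (x, True) = x and (x, False) = x^-1.\<close>

inductive raag_step :: "'v set \<Rightarrow> ('v \<Rightarrow> 'v \<Rightarrow> bool) \<Rightarrow> ('v \<times> bool) list \<Rightarrow> ('v \<times> bool) list \<Rightarrow> bool"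
  for V E where
  cancel: "\<lbrakk>x \<in> V; set xs \<subseteq> V \<times> UNIV; set ys \<subseteq> V \<times> UNIV\<rbrakk>
     \<Longrightarrow> raag_step V E (xs @ [(x, b), (x, \<not> b)] @ ys) (xs @ ys)"
| commute: "\<lbrakk>x \<in> V; y \<in> V; E x y; set xs \<subseteq> V \<times> UNIV; set ys \<subseteq> V \<times> UNIV\<rbrakk>
     \<Longrightarrow> raag_step V E (xs @ [(x, b), (y, c)] @ ys) (xs @ [(y, c), (x, b)] @ ys)"

definition raag_equiv :: "'v set \<Rightarrow> ('v \<Rightarrow> 'v \<Rightarrow> bool) \<Rightarrow> ('v \<times> bool) list \<Rightarrow> ('v \<times> bool) list \<Rightarrow> bool" where
  "raag_equiv V E = (symclp (raag_step V E))\<^sup>*\<^sup>*"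

definition raag_class :: "'v set \<Rightarrow> ('v \<Rightarrow> 'v \<Rightarrow> bool) \<Rightarrow> ('v \<times> bool) list \<Rightarrow> ('v \<times> bool) list set" where
  "raag_class V E w = {w'. raag_equiv V E w w'}"

definition raag :: "'v set \<Rightarrow> ('v \<Rightarrow> 'v \<Rightarrow> bool) \<Rightarrow> ('v \<times> bool) list set monoid" where
  "raag V E = \<lparr>carrier = raag_class V E ` lists (V \<times> UNIV),
     mult = (\<lambda>A B. raag_class V E ((SOME a. a \<in> A) @ (SOME b. b \<in> B))),
     one = raag_class V E []\<rparr>"

definition raag_induced :: "'b set \<Rightarrow> ('b \<Rightarrow> 'b \<Rightarrow> bool) \<Rightarrow> ('a \<Rightarrow> 'b)
     \<Rightarrow> ('a \<times> bool) list set \<Rightarrow> ('b \<times> bool) list set" where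
  "raag_induced VG EG \<phi> A = raag_class VG EG (map (\<lambda>(x, b). (\<phi> x, b)) (SOME a. a \<in> A))"

definition pconj :: "'v set \<Rightarrow> ('v \<Rightarrow> 'v \<Rightarrow> bool) \<Rightarrow> 'v \<Rightarrow> 'v set
     \<Rightarrow> ('v \<times> bool) list set \<Rightarrow> ('v \<times> bool) list set" where
  "pconj V E v C A = raag_class V E (concat (map (\<lambda>(x, b).
      if x \<in> C then [(v, True), (x, b), (v, False)] else [(x, b)]) (SOME a. a \<in> A)))"

definition liftable :: "'a set \<Rightarrow> ('a \<Rightarrow> 'a \<Rightarrow> bool) \<Rightarrow> 'b set \<Rightarrow> ('b \<Rightarrow> 'b \<Rightarrow> bool)
     \<Rightarrow> ('a \<Rightarrow> 'b) \<Rightarrow> (('b \<times> bool) list set \<Rightarrow> ('b \<times> bool) list set) \<Rightarrow> bool" where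
  "liftable VL EL VG EG \<phi> f \<longleftrightarrow> f \<in> iso (raag VG EG) (raag VG EG) \<and>
     (\<exists>F. F \<in> iso (raag VL EL) (raag VL EL) \<and>
        (\<forall>g \<in> carrier (raag VL EL). f (raag_induced VG EG \<phi> g) = raag_induced VG EG \<phi> (F g)))"

definition comp_containing :: "'a set \<Rightarrow> ('a \<Rightarrow> 'a \<Rightarrow> bool) \<Rightarrow> 'a \<Rightarrow> 'a set \<Rightarrow> 'a set" where
  "comp_containing VL EL u A = (THE K. component (VL - st VL EL u) EL K \<and> A \<subseteq> K)"

definition bar_set :: "'a set \<Rightarrow> ('a \<Rightarrow> 'a \<Rightarrow> bool) \<Rightarrow> ('a \<Rightarrow> 'b) \<Rightarrow> 'b \<Rightarrow> 'a set \<Rightarrow> 'b set" where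
  "bar_set VL EL \<phi> v Bt = \<phi> ` (\<Inter>u \<in> {u \<in> VL. \<phi> u = v}. comp_containing VL EL u Bt)"

end

theory Submission
  imports Defs
begin


lemma req_def': "raag_equiv V E = equivclp (raag_step V E)"
  by (simp add: raag_equiv_def equivclp_def)

lemma req_refl[simp]: "raag_equiv V E a a"
  by (simp add: req_def')

lemma req_sym: "raag_equiv V E a b \<Longrightarrow> raag_equiv V E b a"
  by (simp add: req_def' equivclp_sym)

lemma req_trans [trans]: "raag_equiv V E a b \<Longrightarrow> raag_equiv V E b c \<Longrightarrow> raag_equiv V E a c"
  unfolding req_def' by (meson equivp_evquivclp equivp_transp)

lemma req_step: "raag_step V E a b \<Longrightarrow> raag_equiv V E a b"
  by (simp add: req_def' r_into_equivclp)

abbreviation WL :: "'v set \<Rightarrow> ('v \<times> bool) list set" where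
  "WL V \<equiv> lists (V \<times> (UNIV::bool set))"

lemma step_lists: "raag_step V E a b \<Longrightarrow> a \<in> WL V \<and> b \<in> WL V"
  by (induction rule: raag_step.induct) auto

lemma req_lists: "raag_equiv V E a b \<Longrightarrow> a \<in> WL V \<Longrightarrow> b \<in> WL V"
  unfolding req_def'
  by (induction rule: equivclp_induct) (auto dest: step_lists)

lemma step_ctx: "raag_step V E a b \<Longrightarrow> xs \<in> WL V \<Longrightarrow> ys \<in> WL V
   \<Longrightarrow> raag_step V E (xs @ a @ ys) (xs @ b @ ys)"
proof (induction rule: raag_step.induct)
  case (cancel x as bs b)
  have "raag_step V E ((xs @ as) @ [(x, b), (x, \<not> b)] @ (bs @ ys)) ((xs @ as) @ (bs @ ys))"
    by (rule raag_step.cancel) (use cancel in auto)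
  then show ?case by simp
next
  case (commute x y as bs b c)
  have "raag_step V E ((xs @ as) @ [(x, b), (y, c)] @ (bs @ ys)) ((xs @ as) @ [(y, c), (x, b)] @ (bs @ ys))"
    by (rule raag_step.commute) (use commute in auto)
  then show ?case by simp
qed

lemma req_ctx: "raag_equiv V E a b \<Longrightarrow> xs \<in> WL V \<Longrightarrow> ys \<in> WL V
   \<Longrightarrow> raag_equiv V E (xs @ a @ ys) (xs @ b @ ys)"
  unfolding req_def'
proof (induction rule: equivclp_induct)
  case base
  then show ?case by simp
next
  case (step y z)
  then have "equivclp (raag_step V E) (xs @ y @ ys) (xs @ z @ ys)"
    using step_ctx by blast
  then show ?case using step equivp_transp equivp_evquivclp by metis
qed

lemma req_app: "raag_equiv V E a a' \<Longrightarrow> raag_equiv V E b b' \<Longrightarrow> a \<in> WL V \<Longrightarrow> b \<in> WL V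
  \<Longrightarrow> raag_equiv V E (a @ b) (a' @ b')"
proof -
  assume h: "raag_equiv V E a a'" "raag_equiv V E b b'" "a \<in> WL V" "b \<in> WL V"
  have a': "a' \<in> WL V" using req_lists h by blast
  have "raag_equiv V E ([] @ a @ b) ([] @ a' @ b)" using h req_ctx[of V E a a' "[]" b] by simp
  moreover have "raag_equiv V E (a' @ b @ []) (a' @ b' @ [])"
    using h a' req_ctx[of V E b b' a' "[]"] by auto
  ultimately show ?thesis using req_trans by fastforce
qed

lemma req_cancel: "x \<in> V \<Longrightarrow> raag_equiv V E [(x, b), (x, \<not> b)] []"
  using req_step[OF raag_step.cancel[of x V "[]" "[]" E b]] by simp

lemma req_commute: "x \<in> V \<Longrightarrow> y \<in> V \<Longrightarrow> E x y \<Longrightarrow> raag_equiv V E [(x, b), (y, c)] [(y, c), (x, b)]"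
  using req_step[OF raag_step.commute[of x V y E "[]" "[]" b c]] by simp

definition winv :: "('v \<times> bool) list \<Rightarrow> ('v \<times> bool) list" where
  "winv w = rev (map (\<lambda>(x, b). (x, \<not> b)) w)"

lemma winv_Nil[simp]: "winv [] = []" and winv_Cons[simp]: "winv (a # w) = winv w @ [(fst a, \<not> snd a)]"
  and winv_app[simp]: "winv (w @ w') = winv w' @ winv w"
  by (auto simp: winv_def split: prod.splits)

lemma winv_winv[simp]: "winv (winv w) = w"
  by (induction w) auto

lemma winv_lists[simp]: "(winv w \<in> WL V) = (w \<in> WL V)"
  by (induction w) auto

lemma set_winv[simp]: "set (winv w) = (\<lambda>(x, b). (x, \<not> b)) ` set w"
  by (auto simp: winv_def)

lemma winv_single[simp]: "winv [(x,b)] = [(x, \<not> b)]" by simp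

lemma req_cancel_w: "w \<in> WL V \<Longrightarrow> raag_equiv V E (w @ winv w) []"
proof (induction w)
  case Nil
  then show ?case by simp
next
  case (Cons a w)
  obtain x b where a: "a = (x, b)" by force
  have "raag_equiv V E ([(x,b)] @ (w @ winv w) @ [(x, \<not> b)]) ([(x,b)] @ [] @ [(x, \<not> b)])"
    using Cons a by (intro req_ctx) auto
  moreover have "raag_equiv V E [(x,b), (x, \<not>b)] []" using Cons a req_cancel by auto
  ultimately show ?case using a req_trans by fastforce
qed

lemma req_cancel_w': "w \<in> WL V \<Longrightarrow> raag_equiv V E (winv w @ w) []"
  using req_cancel_w[of "winv w" V E] by simp

lemma step_winv: "raag_step V E a b \<Longrightarrow> raag_equiv V E (winv a) (winv b)"
proof (induction rule: raag_step.induct)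
  case (cancel x xs ys b)
  have "raag_step V E (winv ys @ [(x, b), (x, \<not> b)] @ winv xs) (winv ys @ winv xs)"
    by (rule raag_step.cancel) (use cancel in auto)
  then show ?case by (simp add: req_step)
next
  case (commute x y xs ys b c)
  have "raag_step V E (winv ys @ [(x, \<not> b), (y, \<not> c)] @ winv xs) (winv ys @ [(y, \<not> c), (x, \<not> b)] @ winv xs)"
    by (rule raag_step.commute) (use commute in auto)
  then show ?case by (simp add: req_step req_sym)
qed

lemma req_winv: "raag_equiv V E a b \<Longrightarrow> raag_equiv V E (winv a) (winv b)"
proof -
  assume "raag_equiv V E a b"
  then show ?thesis unfolding req_def'
  proof (induction rule: equivclp_induct)
    case base then show ?case by simp
  next
    case (step y z)
    then have "raag_equiv V E (winv y) (winv z)"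
      using step_winv req_sym by blast
    then show ?case using step req_trans unfolding req_def' by metis
  qed
qed

lemma req_commute_inv:
  assumes "p \<in> WL V" "q \<in> WL V" "raag_equiv V E (p @ q) (q @ p)"
  shows "raag_equiv V E (winv p @ q) (q @ winv p)"
proof -
  have c1: "raag_equiv V E (p @ winv p) []" "raag_equiv V E (winv p @ p) []"
    using req_cancel_w[OF assms(1)] req_cancel_w'[OF assms(1)] by auto
  have "raag_equiv V E ((winv p @ q) @ [] @ []) ((winv p @ q) @ (p @ winv p) @ [])"
    using assms c1 by (intro req_ctx) (auto intro: req_sym)
  also have "raag_equiv V E \<dots> (winv p @ (q @ p) @ winv p)" by simp
  also have "raag_equiv V E \<dots> (winv p @ (p @ q) @ winv p)"
    using assms by (intro req_ctx) (auto intro: req_sym)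
  also have "raag_equiv V E \<dots> ([] @ (winv p @ p) @ (q @ winv p))" by simp
  also have "raag_equiv V E \<dots> ([] @ [] @ (q @ winv p))"
    using assms c1 by (intro req_ctx) auto
  finally show ?thesis by simp
qed


fun ls :: "('a \<Rightarrow> ('b \<times> bool) list) \<Rightarrow> ('a \<times> bool) \<Rightarrow> ('b \<times> bool) list" where
  "ls \<sigma> (x, b) = (if b then \<sigma> x else winv (\<sigma> x))"

definition wsubst :: "('a \<Rightarrow> ('b \<times> bool) list) \<Rightarrow> ('a \<times> bool) list \<Rightarrow> ('b \<times> bool) list" where
  "wsubst \<sigma> w = concat (map (ls \<sigma>) w)"

lemma wsubst_Nil[simp]: "wsubst \<sigma> [] = []"
  and wsubst_Cons[simp]: "wsubst \<sigma> (a # w) = ls \<sigma> a @ wsubst \<sigma> w"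
  and wsubst_app[simp]: "wsubst \<sigma> (w @ w') = wsubst \<sigma> w @ wsubst \<sigma> w'"
  by (auto simp: wsubst_def)

lemma ls_flip: "ls \<sigma> (x, \<not> b) = winv (ls \<sigma> (x, b))"
  by auto

lemma wsubst_winv: "wsubst \<sigma> (winv w) = winv (wsubst \<sigma> w)"
proof (induction w)
  case Nil then show ?case by simp
next
  case (Cons a w)
  obtain x b where a: "a = (x, b)" by force
  show ?case using Cons by (simp add: a ls_flip del: ls.simps)
qed

lemma wsubst_comp: "wsubst \<tau> (wsubst \<sigma> w) = wsubst (\<lambda>x. wsubst \<tau> (\<sigma> x)) w"
proof (induction w)
  case Nil then show ?case by simp
next
  case (Cons a w)
  obtain x b where a: "a = (x, b)" by force
  show ?case using Cons by (simp add: a wsubst_winv)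
qed

lemma wsubst_single[simp]: "wsubst (\<lambda>x. [(x, True)]) w = w"
  by (induction w) auto

definition gsub :: "'a set \<Rightarrow> ('a \<Rightarrow> 'a \<Rightarrow> bool) \<Rightarrow> 'b set \<Rightarrow> ('b \<Rightarrow> 'b \<Rightarrow> bool)
    \<Rightarrow> ('a \<Rightarrow> ('b \<times> bool) list) \<Rightarrow> bool" where
  "gsub V1 E1 V2 E2 \<sigma> \<longleftrightarrow> (\<forall>x\<in>V1. \<sigma> x \<in> WL V2) \<and>
     (\<forall>x\<in>V1. \<forall>y\<in>V1. E1 x y \<longrightarrow> raag_equiv V2 E2 (\<sigma> x @ \<sigma> y) (\<sigma> y @ \<sigma> x))"

lemma ls_lists: assumes "gsub V1 E1 V2 E2 \<sigma>" "x \<in> V1" shows "ls \<sigma> (x, b) \<in> WL V2"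
proof -
  have s: "\<sigma> x \<in> WL V2" using assms unfolding gsub_def by blast
  show ?thesis
  proof (cases b)
    case True then show ?thesis using s by simp
  next
    case False then show ?thesis using winv_lists[THEN iffD2, OF s] by simp
  qed
qed

lemma wsubst_lists: "gsub V1 E1 V2 E2 \<sigma> \<Longrightarrow> w \<in> WL V1 \<Longrightarrow> wsubst \<sigma> w \<in> WL V2"
proof (induction w)
  case Nil then show ?case by simp
next
  case (Cons a w)
  obtain x b where a: "a = (x, b)" by force
  have x: "x \<in> V1" using Cons a by auto
  have 1: "ls \<sigma> (x, b) \<in> WL V2" by (rule ls_lists[OF Cons.prems(1) x])
  have 2: "wsubst \<sigma> w \<in> WL V2" using Cons by simp
  show ?case using 1 2 a by (simp only: wsubst_Cons append_in_lists_conv)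
qed

lemma ls_commute:
  assumes g: "gsub V1 E1 V2 E2 \<sigma>" and xy: "x \<in> V1" "y \<in> V1" "E1 x y"
  shows "raag_equiv V2 E2 (ls \<sigma> (x, b) @ ls \<sigma> (y, c)) (ls \<sigma> (y, c) @ ls \<sigma> (x, b))"
proof -
  have p: "\<sigma> x \<in> WL V2" and q: "\<sigma> y \<in> WL V2" and pq: "raag_equiv V2 E2 (\<sigma> x @ \<sigma> y) (\<sigma> y @ \<sigma> x)"
    using g xy unfolding gsub_def by auto
  have FT: "raag_equiv V2 E2 (winv (\<sigma> x) @ \<sigma> y) (\<sigma> y @ winv (\<sigma> x))"
    using req_commute_inv[OF p q pq] .
  have TF: "raag_equiv V2 E2 (\<sigma> x @ winv (\<sigma> y)) (winv (\<sigma> y) @ \<sigma> x)"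
    using req_sym[OF req_commute_inv[OF q p req_sym[OF pq]]] .
  have FF: "raag_equiv V2 E2 (winv (\<sigma> x) @ winv (\<sigma> y)) (winv (\<sigma> y) @ winv (\<sigma> x))"
    using req_sym[OF req_commute_inv[OF q _ req_sym[OF FT]]] p by simp
  show ?thesis using pq FT TF FF by auto
qed

lemma wsubst_step:
  assumes g: "gsub V1 E1 V2 E2 \<sigma>"
  shows "raag_step V1 E1 a b \<Longrightarrow> raag_equiv V2 E2 (wsubst \<sigma> a) (wsubst \<sigma> b)"
proof (induction rule: raag_step.induct)
  case (cancel x xs ys b)
  have l: "ls \<sigma> (x, b) \<in> WL V2" using ls_lists[OF g] cancel by auto
  have "raag_equiv V2 E2 (wsubst \<sigma> xs @ (ls \<sigma> (x, b) @ winv (ls \<sigma> (x, b))) @ wsubst \<sigma> ys)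
        (wsubst \<sigma> xs @ [] @ wsubst \<sigma> ys)"
    using cancel l by (intro req_ctx req_cancel_w wsubst_lists[OF g]) auto
  then show ?case by (simp add: ls_flip del: ls.simps)
next
  case (commute x y xs ys b c)
  have "raag_equiv V2 E2 (wsubst \<sigma> xs @ (ls \<sigma> (x, b) @ ls \<sigma> (y, c)) @ wsubst \<sigma> ys)
        (wsubst \<sigma> xs @ (ls \<sigma> (y, c) @ ls \<sigma> (x, b)) @ wsubst \<sigma> ys)"
    using commute by (intro req_ctx ls_commute[OF g] wsubst_lists[OF g]) auto
  then show ?case by (simp del: ls.simps)
qed

lemma wsubst_req:
  assumes g: "gsub V1 E1 V2 E2 \<sigma>" and e: "raag_equiv V1 E1 a b"
  shows "raag_equiv V2 E2 (wsubst \<sigma> a) (wsubst \<sigma> b)"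
  using e unfolding req_def'[of V1]
proof (induction rule: equivclp_induct)
  case base then show ?case by simp
next
  case (step y z)
  then have "raag_equiv V2 E2 (wsubst \<sigma> y) (wsubst \<sigma> z)"
    using wsubst_step[OF g] req_sym by blast
  then show ?case using step req_trans by blast
qed

lemma wsubst_cong:
  assumes h: "\<And>x. x \<in> V1 \<Longrightarrow> \<rho> x \<in> WL V2 \<and> \<rho>' x \<in> WL V2 \<and> raag_equiv V2 E2 (\<rho> x) (\<rho>' x)"
  shows "w \<in> WL V1 \<Longrightarrow> raag_equiv V2 E2 (wsubst \<rho> w) (wsubst \<rho>' w)"
proof (induction w)
  case Nil then show ?case by simp
next
  case (Cons a w)
  obtain x b where a: "a = (x, b)" by force
  have x: "x \<in> V1" using Cons a by auto
  have 1: "raag_equiv V2 E2 (ls \<rho> (x, b)) (ls \<rho>' (x, b))"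
    using h[OF x] req_winv by auto
  have 2: "ls \<rho> (x, b) \<in> WL V2" using h[OF x] by auto
  have 3: "wsubst \<rho> w \<in> WL V2"
    using wsubst_lists[of V1 "\<lambda>_ _. False" V2 E2 \<rho>] h Cons by (auto simp: gsub_def)
  show ?case using req_app[OF 1 Cons.IH 2 3] Cons a by (simp del: ls.simps)
qed

lemma class_eq: "raag_class V E a = raag_class V E b \<longleftrightarrow> raag_equiv V E a b"
proof
  assume "raag_class V E a = raag_class V E b"
  then have "b \<in> raag_class V E a" by (simp add: raag_class_def)
  then show "raag_equiv V E a b" by (simp add: raag_class_def)
next
  assume h: "raag_equiv V E a b"
  show "raag_class V E a = raag_class V E b"
    unfolding raag_class_def using h req_sym req_trans by blast
qed

lemma some_class: "raag_equiv V E a (SOME c. c \<in> raag_class V E a)"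
proof -
  have "a \<in> raag_class V E a" by (simp add: raag_class_def)
  then have "(SOME c. c \<in> raag_class V E a) \<in> raag_class V E a" by (rule someI)
  then show ?thesis by (simp add: raag_class_def)
qed

definition hsubst :: "'b set \<Rightarrow> ('b \<Rightarrow> 'b \<Rightarrow> bool) \<Rightarrow> ('a \<Rightarrow> ('b \<times> bool) list)
   \<Rightarrow> ('a \<times> bool) list set \<Rightarrow> ('b \<times> bool) list set" where
  "hsubst V E \<sigma> A = raag_class V E (wsubst \<sigma> (SOME a. a \<in> A))"

lemma hsubst_class:
  assumes g: "gsub V1 E1 V2 E2 \<sigma>"
  shows "hsubst V2 E2 \<sigma> (raag_class V1 E1 a) = raag_class V2 E2 (wsubst \<sigma> a)"
  unfolding hsubst_def class_eq
  using wsubst_req[OF g some_class] req_sym by blast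

lemma carrier_raag: "carrier (raag V E) = raag_class V E ` WL V"
  by (simp add: raag_def)

lemma raag_mult:
  assumes "a \<in> WL V" "b \<in> WL V"
  shows "raag_class V E a \<otimes>\<^bsub>raag V E\<^esub> raag_class V E b = raag_class V E (a @ b)"
proof -
  have "raag_equiv V E (a @ b) ((SOME c. c \<in> raag_class V E a) @ (SOME c. c \<in> raag_class V E b))"
    using assms by (intro req_app some_class)
  then show ?thesis by (simp add: raag_def class_eq req_sym)
qed

lemma hsubst_hom:
  assumes g: "gsub V1 E1 V2 E2 \<sigma>"
  shows "hsubst V2 E2 \<sigma> \<in> hom (raag V1 E1) (raag V2 E2)"
proof (rule homI)
  fix A assume "A \<in> carrier (raag V1 E1)"
  then obtain a where a: "a \<in> WL V1" "A = raag_class V1 E1 a" by (auto simp: carrier_raag)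
  show "hsubst V2 E2 \<sigma> A \<in> carrier (raag V2 E2)"
    using a hsubst_class[OF g] wsubst_lists[OF g] by (auto simp: carrier_raag)
next
  fix A B assume "A \<in> carrier (raag V1 E1)" "B \<in> carrier (raag V1 E1)"
  then obtain a b where a: "a \<in> WL V1" "A = raag_class V1 E1 a" and b: "b \<in> WL V1" "B = raag_class V1 E1 b"
    by (auto simp: carrier_raag)
  show "hsubst V2 E2 \<sigma> (A \<otimes>\<^bsub>raag V1 E1\<^esub> B) = hsubst V2 E2 \<sigma> A \<otimes>\<^bsub>raag V2 E2\<^esub> hsubst V2 E2 \<sigma> B"
    using a b by (simp add: raag_mult hsubst_class[OF g] wsubst_lists[OF g])
qed

lemma gsub_comp:
  assumes g1: "gsub V1 E1 V2 E2 \<sigma>" and g2: "gsub V2 E2 V3 E3 \<tau>"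
  shows "gsub V1 E1 V3 E3 (\<lambda>x. wsubst \<tau> (\<sigma> x))"
  unfolding gsub_def
proof (intro conjI ballI impI)
  fix x assume "x \<in> V1"
  then have "\<sigma> x \<in> WL V2" using g1 unfolding gsub_def by blast
  then show "wsubst \<tau> (\<sigma> x) \<in> WL V3" using wsubst_lists[OF g2] by blast
next
  fix x y assume "x \<in> V1" "y \<in> V1" "E1 x y"
  then have "raag_equiv V2 E2 (\<sigma> x @ \<sigma> y) (\<sigma> y @ \<sigma> x)" using g1 unfolding gsub_def by blast
  from wsubst_req[OF g2 this]
  show "raag_equiv V3 E3 (wsubst \<tau> (\<sigma> x) @ wsubst \<tau> (\<sigma> y)) (wsubst \<tau> (\<sigma> y) @ wsubst \<tau> (\<sigma> x))"
    by simp
qed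

lemma hsubst_comp:
  assumes g: "gsub V1 E1 V2 E2 \<sigma>" "gsub V2 E2 V3 E3 \<tau>" and A: "A \<in> carrier (raag V1 E1)"
  shows "hsubst V3 E3 \<tau> (hsubst V2 E2 \<sigma> A) = hsubst V3 E3 (\<lambda>x. wsubst \<tau> (\<sigma> x)) A"
proof -
  obtain a where a: "a \<in> WL V1" "A = raag_class V1 E1 a" using A by (auto simp: carrier_raag)
  show ?thesis using a hsubst_class[OF g(1)] hsubst_class[OF g(2)] hsubst_class[OF gsub_comp[OF g]]
    by (simp add: wsubst_comp)
qed

lemma hsubst_iso:
  assumes g: "gsub V E V E \<sigma>" "gsub V E V E \<tau>"
    and i1: "\<And>x. x \<in> V \<Longrightarrow> raag_equiv V E (wsubst \<tau> (\<sigma> x)) [(x, True)]"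
    and i2: "\<And>x. x \<in> V \<Longrightarrow> raag_equiv V E (wsubst \<sigma> (\<tau> x)) [(x, True)]"
  shows "hsubst V E \<sigma> \<in> iso (raag V E) (raag V E)"
proof (rule isoI[OF hsubst_hom[OF g(1)]])
  have inv: "hsubst V E \<beta> (hsubst V E \<alpha> A) = A"
    if ga: "gsub V E V E \<alpha>" and gb: "gsub V E V E \<beta>"
      and ii: "\<And>x. x \<in> V \<Longrightarrow> raag_equiv V E (wsubst \<beta> (\<alpha> x)) [(x, True)]"
      and A: "A \<in> carrier (raag V E)" for \<alpha> \<beta> A
  proof -
    obtain a where a: "a \<in> WL V" "A = raag_class V E a" using A by (auto simp: carrier_raag)
    have "raag_equiv V E (wsubst (\<lambda>x. wsubst \<beta> (\<alpha> x)) a) (wsubst (\<lambda>x. [(x, True)]) a)"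
      apply (rule wsubst_cong[OF _ a(1)])
      using ii wsubst_lists[OF gb] ga unfolding gsub_def by auto
    then show ?thesis
      using hsubst_comp[OF ga gb A] a hsubst_class[OF gsub_comp[OF ga gb]] by (simp add: class_eq)
  qed
  have maps: "hsubst V E \<alpha> ` carrier (raag V E) \<subseteq> carrier (raag V E)" if "gsub V E V E \<alpha>" for \<alpha>
    using hsubst_hom[OF that] by (auto simp: hom_def)
  show "bij_betw (hsubst V E \<sigma>) (carrier (raag V E)) (carrier (raag V E))"
    by (rule bij_betw_byWitness[where f'="hsubst V E \<tau>"])
       (use inv[OF g(1) g(2) i1] inv[OF g(2) g(1) i2] maps[OF g(1)] maps[OF g(2)] in auto)
qed


lemma req_canc: assumes "x \<in> V" "xs \<in> WL V" "ys \<in> WL V"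
  shows "raag_equiv V E (xs @ (x, b) # (x, \<not> b) # ys) (xs @ ys)"
proof -
  have "raag_step V E (xs @ [(x,b),(x,\<not>b)] @ ys) (xs @ ys)"
    by (rule raag_step.cancel) (use assms in auto)
  then show ?thesis by (simp add: req_step)
qed

lemma req_comm: assumes "x \<in> V" "y \<in> V" "E x y" "xs \<in> WL V" "ys \<in> WL V"
  shows "raag_equiv V E (xs @ (x, b) # (y, c) # ys) (xs @ (y, c) # (x, b) # ys)"
proof -
  have "raag_step V E (xs @ [(x,b),(y,c)] @ ys) (xs @ [(y,c),(x,b)] @ ys)"
    by (rule raag_step.commute) (use assms in auto)
  then show ?thesis by (simp add: req_step)
qed

lemma req_comm': "x \<in> V \<Longrightarrow> y \<in> V \<Longrightarrow> E x y \<Longrightarrow> xs \<in> WL V \<Longrightarrow> ys \<in> WL V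
   \<Longrightarrow> raag_equiv V E (xs @ (y, c) # (x, b) # ys) (xs @ (x, b) # (y, c) # ys)"
  using req_comm req_sym by metis

definition pcs :: "'v \<Rightarrow> 'v set \<Rightarrow> bool \<Rightarrow> 'v \<Rightarrow> ('v \<times> bool) list" where
  "pcs u C e x = (if x \<in> C then [(u, e), (x, True), (u, \<not> e)] else [(x, True)])"

lemma pcs_mixed:
  assumes u: "u \<in> V" and x: "x \<in> V" and y: "y \<in> V" and E: "E x y" and yu: "y = u \<or> E u y"
  shows "raag_equiv V E ([(u, e), (x, True), (u, \<not> e)] @ [(y, True)]) ([(y, True)] @ [(u, e), (x, True), (u, \<not> e)])"
proof -
  have c: "raag_equiv V E (xs @ (u, c) # (y, True) # ys) (xs @ (y, True) # (u, c) # ys)"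
    if "xs \<in> WL V" "ys \<in> WL V" for xs ys c
    using yu
  proof
    assume yu: "y = u"
    show ?thesis
    proof (cases c)
      case True then show ?thesis using yu by simp
    next
      case False
      have "raag_equiv V E (xs @ (u, False) # (u, \<not> False) # ys) (xs @ ys)"
        using u that by (intro req_canc) auto
      moreover have "raag_equiv V E (xs @ (u, True) # (u, \<not> True) # ys) (xs @ ys)"
        using u that by (intro req_canc) auto
      ultimately show ?thesis using yu False req_sym req_trans by fastforce
    qed
  next
    assume "E u y" then show ?thesis using req_comm[OF u y _ that] by simp
  qed
  have "raag_equiv V E ([(u, e), (x, True)] @ (u, \<not> e) # (y, True) # []) ([(u, e), (x, True)] @ (y, True) # (u, \<not> e) # [])"
    using u x by (intro c) auto
  also have "raag_equiv V E \<dots> ([(u, e)] @ (x, True) # (y, True) # [(u, \<not> e)])" by simp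
  also have "raag_equiv V E \<dots> ([(u, e)] @ (y, True) # (x, True) # [(u, \<not> e)])"
    using u x y E by (intro req_comm) auto
  also have "raag_equiv V E \<dots> ([] @ (u, e) # (y, True) # [(x, True), (u, \<not> e)])" by simp
  also have "raag_equiv V E \<dots> ([] @ (y, True) # (u, e) # [(x, True), (u, \<not> e)])"
    using u x by (intro c) auto
  finally show ?thesis by simp
qed

lemma pcs_gsub:
  assumes u: "u \<in> V" and uC: "u \<notin> C" and sym: "\<And>a b. E a b \<Longrightarrow> E b a"
    and cl: "\<And>a b. a \<in> C \<Longrightarrow> b \<in> V \<Longrightarrow> E a b \<Longrightarrow> b \<notin> C \<Longrightarrow> b = u \<or> E u b"
  shows "gsub V E V E (pcs u C e)"
  unfolding gsub_def
proof (intro conjI ballI impI)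
  fix x assume "x \<in> V" then show "pcs u C e x \<in> WL V" using u by (auto simp: pcs_def)
next
  fix x y assume x: "x \<in> V" and y: "y \<in> V" and E: "E x y"
  show "raag_equiv V E (pcs u C e x @ pcs u C e y) (pcs u C e y @ pcs u C e x)"
  proof (cases "x \<in> C")
    case xC: True
    show ?thesis
    proof (cases "y \<in> C")
      case True
      have "raag_equiv V E ([(u, e), (x, True)] @ (u, \<not> e) # (u, \<not> \<not> e) # [(y, True), (u, \<not> e)])
             ([(u, e), (x, True)] @ [(y, True), (u, \<not> e)])"
        using u x y by (intro req_canc) auto
      also have "raag_equiv V E \<dots> ([(u, e)] @ (x, True) # (y, True) # [(u, \<not> e)])" by simp
      also have "raag_equiv V E \<dots> ([(u, e)] @ (y, True) # (x, True) # [(u, \<not> e)])"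
        using u x y E by (intro req_comm) auto
      also have "raag_equiv V E \<dots> ([(u, e), (y, True)] @ [(x, True), (u, \<not> e)])" by simp
      also have "raag_equiv V E \<dots> ([(u, e), (y, True)] @ (u, \<not> e) # (u, \<not> \<not> e) # [(x, True), (u, \<not> e)])"
        using u x y by (intro req_sym[OF req_canc]) auto
      finally show ?thesis using xC True by (simp add: pcs_def)
    next
      case False
      have "y = u \<or> E u y" using cl[OF xC y E False] .
      from pcs_mixed[where E=E and e=e, OF u x y E this] show ?thesis using xC False by (simp add: pcs_def)
    qed
  next
    case xC: False
    show ?thesis
    proof (cases "y \<in> C")
      case True
      have "x = u \<or> E u x" using cl[OF True x sym[OF E] xC] .
      from req_sym[OF pcs_mixed[where E=E and e=e, OF u y x sym[OF E] this]] show ?thesis using xC True by (simp add: pcs_def)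
    next
      case False
      then show ?thesis using xC req_comm[where E=E and xs="[]" and ys="[]" and b=True and c=True, OF x y E] by (simp add: pcs_def)
    qed
  qed
qed

lemma pcs_inv:
  assumes u: "u \<in> V" and uC: "u \<notin> C" and x: "x \<in> V"
  shows "raag_equiv V E (wsubst (pcs u C (\<not> e)) (pcs u C e x)) [(x, True)]"
proof (cases "x \<in> C")
  case True
  have lu: "(if c then [(u, True)] else [(u, False)]) = [(u, c)]" for c by auto
  have "wsubst (pcs u C (\<not> e)) (pcs u C e x) = [] @ (u, e) # (u, \<not> e) # [(x, True), (u, e), (u, \<not> e)]"
    using True uC by (simp add: pcs_def lu)
  also have "raag_equiv V E \<dots> ([] @ [(x, True), (u, e), (u, \<not> e)])"
    using u x by (intro req_canc) auto
  also have "raag_equiv V E \<dots> ([(x, True)] @ (u, e) # (u, \<not> e) # [])" by simp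
  also have "raag_equiv V E \<dots> ([(x, True)] @ [])"
    using u x by (intro req_canc) auto
  finally show ?thesis by simp
next
  case False
  then show ?thesis by (simp add: pcs_def)
qed

lemma pcs_iso:
  assumes u: "u \<in> V" and uC: "u \<notin> C" and sym: "\<And>a b. E a b \<Longrightarrow> E b a"
    and cl: "\<And>a b. a \<in> C \<Longrightarrow> b \<in> V \<Longrightarrow> E a b \<Longrightarrow> b \<notin> C \<Longrightarrow> b = u \<or> E u b"
  shows "hsubst V E (pcs u C e) \<in> iso (raag V E) (raag V E)"
proof -
  have g: "gsub V E V E (pcs u C e')" for e' by (rule pcs_gsub[where E=E, OF u uC sym cl])
  show ?thesis
    by (rule hsubst_iso[OF g[of e] g[of "\<not> e"]])
       (use pcs_inv[OF u uC, of _ E e] pcs_inv[OF u uC, of _ E "\<not> e"] in auto)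
qed

lemma pconj_eq: "pconj V E v C = hsubst V E (pcs v C True)"
proof
  fix A
  have "(\<lambda>(x, b). if x \<in> C then [(v, True), (x, b), (v, False)] else [(x, b)]) = ls (pcs v C True)"
    by (auto simp: pcs_def)
  then show "pconj V E v C A = hsubst V E (pcs v C True) A"
    by (simp add: pconj_def hsubst_def wsubst_def)
qed

lemma raag_induced_eq: "raag_induced V E \<phi> = hsubst V E (\<lambda>x. [(\<phi> x, True)])"
proof
  fix A
  have "concat (map (ls (\<lambda>x. [(\<phi> x, True)])) w) = map (\<lambda>(x, b). (\<phi> x, b)) w" for w
    by (induction w) auto
  then show "raag_induced V E \<phi> A = hsubst V E (\<lambda>x. [(\<phi> x, True)]) A"
    by (simp add: raag_induced_def hsubst_def wsubst_def)
qed





lemma raag_mult_closed: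
  assumes "A \<in> carrier (raag V E)" "B \<in> carrier (raag V E)"
  shows "A \<otimes>\<^bsub>raag V E\<^esub> B \<in> carrier (raag V E)"
proof -
  obtain a b where "a \<in> WL V" "A = raag_class V E a" "b \<in> WL V" "B = raag_class V E b"
    using assms by (auto simp: carrier_raag)
  then show ?thesis by (simp add: raag_mult carrier_raag)
qed

lemma iso_cong:
  assumes f: "f \<in> iso (raag V E) H" and eq: "\<And>x. x \<in> carrier (raag V E) \<Longrightarrow> g x = f x"
  shows "g \<in> iso (raag V E) H"
proof (rule isoI)
  have fh: "f \<in> hom (raag V E) H" and fb: "bij_betw f (carrier (raag V E)) (carrier H)"
    using f by (auto simp: iso_def)
  show "g \<in> hom (raag V E) H"
  proof (rule homI)
    fix x assume "x \<in> carrier (raag V E)"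
    then show "g x \<in> carrier H" using eq fh by (simp add: hom_in_carrier)
  next
    fix x y assume xy: "x \<in> carrier (raag V E)" "y \<in> carrier (raag V E)"
    have "g (x \<otimes>\<^bsub>raag V E\<^esub> y) = f (x \<otimes>\<^bsub>raag V E\<^esub> y)"
      using eq raag_mult_closed[OF xy] by blast
    also have "\<dots> = f x \<otimes>\<^bsub>H\<^esub> f y" using fh xy by (simp add: hom_def)
    finally show "g (x \<otimes>\<^bsub>raag V E\<^esub> y) = g x \<otimes>\<^bsub>H\<^esub> g y" using eq xy by simp
  qed
  show "bij_betw g (carrier (raag V E)) (carrier H)"
    using fb eq bij_betw_cong by blast
qed

fun sigL :: "('a \<times> 'a set \<times> bool) list \<Rightarrow> 'a \<Rightarrow> ('a \<times> bool) list" where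
  "sigL [] = (\<lambda>x. [(x, True)])"
| "sigL ((u, C, e) # L) = (\<lambda>x. wsubst (sigL L) (pcs u C e x))"

definition valid_op :: "'a set \<Rightarrow> ('a \<Rightarrow> 'a \<Rightarrow> bool) \<Rightarrow> ('a \<times> 'a set \<times> bool) \<Rightarrow> bool" where
  "valid_op V E op \<longleftrightarrow> (case op of (u, C, e) \<Rightarrow> u \<in> V \<and> u \<notin> C \<and>
      (\<forall>a\<in>C. \<forall>b\<in>V. E a b \<longrightarrow> b \<notin> C \<longrightarrow> b = u \<or> E u b))"

lemma single_gsub: "gsub V E V E (\<lambda>x. [(x, True)])"
  unfolding gsub_def
proof (intro conjI ballI impI)
  fix x y assume "x \<in> V" "y \<in> V" "E x y"
  from req_comm[where E=E and xs="[]" and ys="[]" and b=True and c=True, OF this]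
  show "raag_equiv V E ([(x, True)] @ [(y, True)]) ([(y, True)] @ [(x, True)])" by simp
qed auto

lemma sigL_gsub:
  assumes sym: "\<And>a b. E a b \<Longrightarrow> E b a"
  shows "\<forall>op\<in>set L. valid_op V E op \<Longrightarrow> gsub V E V E (sigL L)"
proof (induction L)
  case Nil then show ?case by (simp add: single_gsub)
next
  case (Cons op L)
  obtain u C e where op: "op = (u, C, e)" by (cases op) auto
  have "gsub V E V E (pcs u C e)"
    using Cons.prems op by (intro pcs_gsub[where E=E]) (auto simp: valid_op_def intro: sym)
  from gsub_comp[OF this Cons.IH] Cons.prems show ?case by (simp add: op)
qed

lemma sigL_iso:
  assumes sym: "\<And>a b. E a b \<Longrightarrow> E b a"
  shows "\<forall>op\<in>set L. valid_op V E op \<Longrightarrow> hsubst V E (sigL L) \<in> iso (raag V E) (raag V E)"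
proof (induction L)
  case Nil then show ?case using hsubst_iso[OF single_gsub single_gsub] by simp
next
  case (Cons op L)
  obtain u C e where op: "op = (u, C, e)" by (cases op) auto
  have v: "u \<in> V" "u \<notin> C" "\<And>a b. a \<in> C \<Longrightarrow> b \<in> V \<Longrightarrow> E a b \<Longrightarrow> b \<notin> C \<Longrightarrow> b = u \<or> E u b"
    using Cons.prems op by (auto simp: valid_op_def)
  have g: "gsub V E V E (pcs u C e)" by (rule pcs_gsub[where E=E, OF v(1,2) sym v(3)])
  have i: "hsubst V E (sigL L) \<circ> hsubst V E (pcs u C e) \<in> iso (raag V E) (raag V E)"
    using iso_set_trans[OF pcs_iso[where E=E, OF v(1,2) sym v(3)] Cons.IH] Cons.prems by auto
  show ?case
    by (rule iso_cong[OF i]) (simp add: op hsubst_comp[OF g sigL_gsub[OF sym]] Cons.prems)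
qed

fun kL :: "('a \<times> 'a set \<times> bool) list \<Rightarrow> 'a \<Rightarrow> int" where
  "kL [] w = 0"
| "kL ((u, C, e) # L) w = (if w \<in> C then (if e then 1 else -1) else 0) + kL L w"

definition vp :: "'b \<Rightarrow> int \<Rightarrow> ('b \<times> bool) list" where
  "vp v k = (if 0 \<le> k then replicate (nat k) (v, True) else replicate (nat (- k)) (v, False))"

lemma vp_lists: "v \<in> V \<Longrightarrow> vp v k \<in> WL V"
  by (auto simp: vp_def)

lemma vp_0[simp]: "vp v 0 = []" and vp_1: "vp v 1 = [(v, True)]" and vp_m1: "vp v (-1) = [(v, False)]"
  by (auto simp: vp_def)

lemma winv_replicate: "winv (replicate n (v, b)) = replicate n (v, \<not> b)"
  by (induction n) (auto simp: replicate_append_same)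

lemma vp_winv: "winv (vp v k) = vp v (- k)"
  by (auto simp: vp_def winv_replicate)

lemma rep_cancel:
  assumes v: "v \<in> V"
  shows "raag_equiv V E (replicate n (v, b) @ replicate m (v, \<not> b))
     (if m \<le> n then replicate (n - m) (v, b) else replicate (m - n) (v, \<not> b))"
proof (induction n arbitrary: m)
  case 0 then show ?case by simp
next
  case (Suc n)
  show ?case
  proof (cases m)
    case 0 then show ?thesis by simp
  next
    case (Suc m')
    have "replicate (Suc n) (v, b) @ replicate m (v, \<not> b) = replicate n (v, b) @ (v, b) # (v, \<not> b) # replicate m' (v, \<not> b)"
      using Suc by (simp add: replicate_append_same[symmetric])
    also have "raag_equiv V E \<dots> (replicate n (v, b) @ replicate m' (v, \<not> b))"
      using v by (intro req_canc) auto
    also have "raag_equiv V E \<dots> (if m' \<le> n then replicate (n - m') (v, b) else replicate (m' - n) (v, \<not> b))"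
      by (rule Suc.IH)
    finally show ?thesis using Suc by (simp only: diff_Suc_Suc Suc_le_mono)
  qed
qed

lemma vp_add:
  assumes v: "v \<in> V"
  shows "raag_equiv V E (vp v a @ vp v b) (vp v (a + b))"
proof (cases "0 \<le> a")
  case a: True
  show ?thesis
  proof (cases "0 \<le> b")
    case True
    have "nat (a + b) = nat a + nat b" using a True by (simp add: nat_add_distrib)
    then show ?thesis using a True by (simp add: vp_def replicate_add[symmetric])
  next
    case False
    have "raag_equiv V E (replicate (nat a) (v, True) @ replicate (nat (-b)) (v, \<not> True))
       (if nat (-b) \<le> nat a then replicate (nat a - nat (-b)) (v, True) else replicate (nat (-b) - nat a) (v, \<not> True))"
      by (rule rep_cancel[OF v])
    moreover have "(if nat (-b) \<le> nat a then replicate (nat a - nat (-b)) (v, True) else replicate (nat (-b) - nat a) (v, \<not> True))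
       = vp v (a + b)"
      using a False by (auto simp: vp_def nat_diff_distrib)
    ultimately show ?thesis using a False by (simp add: vp_def)
  qed
next
  case a: False
  show ?thesis
  proof (cases "0 \<le> b")
    case b: True
    have "raag_equiv V E (replicate (nat (-a)) (v, False) @ replicate (nat b) (v, \<not> False))
       (if nat b \<le> nat (-a) then replicate (nat (-a) - nat b) (v, False) else replicate (nat b - nat (-a)) (v, \<not> False))"
      by (rule rep_cancel[OF v])
    moreover have "(if nat b \<le> nat (-a) then replicate (nat (-a) - nat b) (v, False) else replicate (nat b - nat (-a)) (v, \<not> False))
       = vp v (a + b)"
      using a b by (auto simp: vp_def nat_diff_distrib)
    ultimately show ?thesis using a b by (simp add: vp_def)
  next
    case False
    have "nat (- (a + b)) = nat (-a) + nat (-b)" using a False by (simp add: nat_add_distrib[symmetric])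
    then show ?thesis using a False by (simp add: vp_def replicate_add[symmetric])
  qed
qed

lemma req_comm_st:
  assumes u: "u \<in> V" and y: "y \<in> V" and yu: "y = u \<or> E u y" and xs: "xs \<in> WL V" and ys: "ys \<in> WL V"
  shows "raag_equiv V E (xs @ (u, c) # (y, True) # ys) (xs @ (y, True) # (u, c) # ys)"
  using yu
proof
  assume yu: "y = u"
  show ?thesis
  proof (cases c)
    case True then show ?thesis using yu by simp
  next
    case False
    have "raag_equiv V E (xs @ (u, False) # (u, \<not> False) # ys) (xs @ ys)"
      using u xs ys by (intro req_canc) auto
    moreover have "raag_equiv V E (xs @ (u, True) # (u, \<not> True) # ys) (xs @ ys)"
      using u xs ys by (intro req_canc) auto
    ultimately show ?thesis using yu False req_sym req_trans by fastforce
  qed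
next
  assume "E u y" then show ?thesis using req_comm[OF u y _ xs ys] by simp
qed

lemma rep_comm:
  assumes u: "u \<in> V" and y: "y \<in> V" and yu: "y = u \<or> E u y"
  shows "raag_equiv V E (replicate n (u, c) @ [(y, True)]) ([(y, True)] @ replicate n (u, c))"
proof (induction n)
  case 0 then show ?case by simp
next
  case (Suc n)
  have "replicate (Suc n) (u, c) @ [(y, True)] = [(u, c)] @ (replicate n (u, c) @ [(y, True)]) @ []" by simp
  also have "raag_equiv V E \<dots> ([(u, c)] @ ([(y, True)] @ replicate n (u, c)) @ [])"
    using u by (intro req_ctx Suc.IH) auto
  also have "\<dots> = [] @ (u, c) # (y, True) # replicate n (u, c)" by simp
  also have "raag_equiv V E \<dots> ([] @ (y, True) # (u, c) # replicate n (u, c))"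
    using u y yu by (intro req_comm_st) auto
  finally show ?case by simp
qed

lemma vp_comm:
  assumes u: "u \<in> V" and y: "y \<in> V" and yu: "y = u \<or> E u y"
  shows "raag_equiv V E (vp u k @ [(y, True)]) ([(y, True)] @ vp u k)"
  using rep_comm[where E=E, OF u y yu] by (simp add: vp_def)


lemma phi_gsub:
  assumes "\<And>x. x \<in> VL \<Longrightarrow> \<phi> x \<in> VG" and "\<And>x y. EL x y \<Longrightarrow> EG (\<phi> x) (\<phi> y)"
  shows "gsub VL EL VG EG (\<lambda>x. [(\<phi> x, True)])"
  unfolding gsub_def
proof (intro conjI ballI impI)
  fix x assume "x \<in> VL" then show "[(\<phi> x, True)] \<in> WL VG" using assms by auto
next
  fix x y assume "x \<in> VL" "y \<in> VL" "EL x y"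
  then have "\<phi> x \<in> VG" "\<phi> y \<in> VG" "EG (\<phi> x) (\<phi> y)" using assms by auto
  from req_comm[where E=EG and xs="[]" and ys="[]" and b=True and c=True, OF this]
  show "raag_equiv VG EG ([(\<phi> x, True)] @ [(\<phi> y, True)]) ([(\<phi> y, True)] @ [(\<phi> x, True)])" by simp
qed

lemma sigL_count:
  assumes phiV: "\<And>x. x \<in> VL \<Longrightarrow> \<phi> x \<in> VG" and phiE: "\<And>x y. EL x y \<Longrightarrow> EG (\<phi> x) (\<phi> y)"
    and symL: "\<And>a b. EL a b \<Longrightarrow> EL b a"
    and v: "v \<in> VG"
  shows "\<forall>op\<in>set L. valid_op VL EL op \<and> \<phi> (fst op) = v \<Longrightarrow> w \<in> VL \<Longrightarrow>
    raag_equiv VG EG (wsubst (\<lambda>x. [(\<phi> x, True)]) (sigL L w)) (vp v (kL L w) @ [(\<phi> w, True)] @ vp v (- kL L w))"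
proof (induction L arbitrary: w)
  case Nil then show ?case by simp
next
  case (Cons op L)
  obtain u C e where op: "op = (u, C, e)" by (cases op) auto
  have u: "u \<in> VL" "\<phi> u = v" using Cons.prems op by (auto simp: valid_op_def)
  have vL: "\<forall>op\<in>set L. valid_op VL EL op" using Cons.prems by auto
  define \<rho> where "\<rho> = (\<lambda>y. wsubst (\<lambda>x. [(\<phi> x, True)]) (sigL L y))"
  have g\<rho>: "gsub VL EL VG EG \<rho>"
    unfolding \<rho>_def by (rule gsub_comp[OF sigL_gsub[OF symL vL] phi_gsub[where EL=EL and EG=EG and \<phi>=\<phi>, OF phiV phiE]])
  have \<rho>L: "\<rho> y \<in> WL VG" if "y \<in> VL" for y using g\<rho> that unfolding gsub_def by blast
  have IH: "raag_equiv VG EG (\<rho> y) (vp v (kL L y) @ [(\<phi> y, True)] @ vp v (- kL L y))" if "y \<in> VL" for y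
    unfolding \<rho>_def using Cons.IH Cons.prems that by auto
  have vpL: "vp v k \<in> WL VG" for k using vp_lists[OF v] .
  have \<rho>u: "raag_equiv VG EG (\<rho> u) (vp v 1)"
  proof -
    have "raag_equiv VG EG (\<rho> u) (vp v (kL L u) @ vp v 1 @ vp v (- kL L u))"
      using IH[OF u(1)] u by (simp add: vp_1)
    also have "raag_equiv VG EG \<dots> ((vp v (kL L u) @ vp v 1) @ vp v (- kL L u))" by simp
    also have "raag_equiv VG EG \<dots> (vp v (kL L u + 1) @ vp v (- kL L u))"
      using vpL by (intro req_app vp_add[OF v]) auto
    also have "raag_equiv VG EG \<dots> (vp v (kL L u + 1 + - kL L u))"
      by (rule vp_add[OF v])
    finally show ?thesis by simp
  qed
  define s :: int where "s = (if e then 1 else -1)"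
  have ls1: "raag_equiv VG EG (ls \<rho> (u, e)) (vp v s)"
    using \<rho>u req_winv[OF \<rho>u] by (auto simp: s_def vp_winv)
  have ls2: "raag_equiv VG EG (ls \<rho> (u, \<not> e)) (vp v (- s))"
    using \<rho>u req_winv[OF \<rho>u] by (auto simp: s_def vp_winv)
  have lsL: "ls \<rho> (u, c) \<in> WL VG" for c by (rule ls_lists[OF g\<rho> u(1)])
  have eq: "wsubst (\<lambda>x. [(\<phi> x, True)]) (sigL (op # L) w) = wsubst \<rho> (pcs u C e w)"
    unfolding \<rho>_def by (simp add: op wsubst_comp)
  show ?case
  proof (cases "w \<in> C")
    case False
    then show ?thesis using eq IH[OF Cons.prems(2)] by (simp add: op pcs_def)
  next
    case True
    have "wsubst \<rho> (pcs u C e w) = ls \<rho> (u, e) @ \<rho> w @ ls \<rho> (u, \<not> e)"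
    proof -
      have "ls \<rho> (w, True) = \<rho> w" by simp
      then show ?thesis using True by (simp add: pcs_def del: ls.simps)
    qed
    also have "raag_equiv VG EG \<dots> (vp v s @ (vp v (kL L w) @ [(\<phi> w, True)] @ vp v (- kL L w)) @ vp v (- s))"
      using ls1 ls2 IH[OF Cons.prems(2)] lsL \<rho>L[OF Cons.prems(2)] vpL
      by (intro req_app) (auto simp del: ls.simps)
    also have "\<dots> = (vp v s @ vp v (kL L w)) @ [(\<phi> w, True)] @ (vp v (- kL L w) @ vp v (- s))" by simp
    also have "raag_equiv VG EG \<dots> (vp v (s + kL L w) @ [(\<phi> w, True)] @ vp v (- kL L w + - s))"
      using vpL Cons.prems(2) phiV
      by (intro req_app vp_add[OF v]) (auto simp del: vp_def)
    finally show ?thesis using eq True by (simp add: op s_def add.commute)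
  qed
qed

lemma liftable_crit:
  assumes symL: "\<And>a b. EL a b \<Longrightarrow> EL b a" and symG: "\<And>a b. EG a b \<Longrightarrow> EG b a"
    and phiV: "\<And>x. x \<in> VL \<Longrightarrow> \<phi> x \<in> VG" and phiE: "\<And>x y. EL x y \<Longrightarrow> EG (\<phi> x) (\<phi> y)"
    and v: "v \<in> VG" and vC: "v \<notin> Cg"
    and clG: "\<And>a b. a \<in> Cg \<Longrightarrow> b \<in> VG \<Longrightarrow> EG a b \<Longrightarrow> b \<notin> Cg \<Longrightarrow> b = v \<or> EG v b"
    and L: "\<forall>op\<in>set L. valid_op VL EL op \<and> \<phi> (fst op) = v"
    and cnt1: "\<And>w. w \<in> VL \<Longrightarrow> \<phi> w \<in> Cg \<Longrightarrow> kL L w = 1"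
    and cnt0: "\<And>w. w \<in> VL \<Longrightarrow> \<phi> w \<notin> Cg \<Longrightarrow> \<phi> w \<noteq> v \<Longrightarrow> \<not> EG v (\<phi> w) \<Longrightarrow> kL L w = 0"
  shows "liftable VL EL VG EG \<phi> (pconj VG EG v Cg)"
  unfolding liftable_def
proof (intro conjI exI ballI)
  show "pconj VG EG v Cg \<in> iso (raag VG EG) (raag VG EG)"
    unfolding pconj_eq by (rule pcs_iso[where E=EG, OF v vC symG clG])
  have vL: "\<forall>op\<in>set L. valid_op VL EL op" using L by auto
  show "hsubst VL EL (sigL L) \<in> iso (raag VL EL) (raag VL EL)"
    by (rule sigL_iso[OF symL vL])
  fix g assume "g \<in> carrier (raag VL EL)"
  then obtain a where a: "a \<in> WL VL" "g = raag_class VL EL a" by (auto simp: carrier_raag)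
  have gphi: "gsub VL EL VG EG (\<lambda>x. [(\<phi> x, True)])" by (rule phi_gsub[where EL=EL and EG=EG and \<phi>=\<phi>, OF phiV phiE])
  have gP: "gsub VG EG VG EG (pcs v Cg True)" by (rule pcs_gsub[where E=EG, OF v vC symG clG])
  have gL: "gsub VL EL VL EL (sigL L)" by (rule sigL_gsub[OF symL vL])
  have gPphi: "gsub VL EL VG EG (\<lambda>x. wsubst (pcs v Cg True) [(\<phi> x, True)])" by (rule gsub_comp[OF gphi gP])
  have gphiL: "gsub VL EL VG EG (\<lambda>x. wsubst (\<lambda>x. [(\<phi> x, True)]) (sigL L x))" by (rule gsub_comp[OF gL gphi])
  have lhs: "pconj VG EG v Cg (raag_induced VG EG \<phi> g) = raag_class VG EG (wsubst (\<lambda>x. wsubst (pcs v Cg True) [(\<phi> x, True)]) a)"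
    unfolding pconj_eq raag_induced_eq a(2) hsubst_class[OF gphi] hsubst_class[OF gP] wsubst_comp ..
  have rhs: "raag_induced VG EG \<phi> (hsubst VL EL (sigL L) g) = raag_class VG EG (wsubst (\<lambda>x. wsubst (\<lambda>x. [(\<phi> x, True)]) (sigL L x)) a)"
    unfolding raag_induced_eq a(2) hsubst_class[OF gL] hsubst_class[OF gphi] wsubst_comp ..
  have vpL: "vp v k \<in> WL VG" for k using vp_lists[OF v] .
  have pt: "raag_equiv VG EG (wsubst (pcs v Cg True) [(\<phi> x, True)]) (wsubst (\<lambda>x. [(\<phi> x, True)]) (sigL L x))"
    if x: "x \<in> VL" for x
  proof -
    have c: "raag_equiv VG EG (wsubst (\<lambda>x. [(\<phi> x, True)]) (sigL L x)) (vp v (kL L x) @ [(\<phi> x, True)] @ vp v (- kL L x))"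
      by (rule sigL_count[where EL=EL and EG=EG and \<phi>=\<phi>, OF phiV phiE symL v L x])
    have px: "\<phi> x \<in> VG" using phiV x .
    show ?thesis
    proof (cases "\<phi> x \<in> Cg")
      case True
      then show ?thesis using c cnt1[OF x True] req_sym by (simp add: pcs_def vp_1 vp_m1)
    next
      case nC: False
      show ?thesis
      proof (cases "\<phi> x = v \<or> EG v (\<phi> x)")
        case True
        have "raag_equiv VG EG (vp v (kL L x) @ [(\<phi> x, True)] @ vp v (- kL L x)) (([(\<phi> x, True)] @ vp v (kL L x)) @ vp v (- kL L x))"
          using req_app[OF vp_comm[where E=EG and k="kL L x", OF v px True] req_refl[of VG EG "vp v (- kL L x)"]] vpL px by simp
        also have "raag_equiv VG EG \<dots> ([(\<phi> x, True)] @ vp v (kL L x + - kL L x))"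
          using vpL px by (simp only: append_assoc) (intro req_app vp_add[OF v] req_refl; simp)
        finally have "raag_equiv VG EG (vp v (kL L x) @ [(\<phi> x, True)] @ vp v (- kL L x)) [(\<phi> x, True)]" by simp
        then show ?thesis using c nC req_sym req_trans by (simp add: pcs_def) blast
      next
        case False
        then show ?thesis using c nC cnt0[OF x nC] req_sym by (simp add: pcs_def)
      qed
    qed
  qed
  have "raag_equiv VG EG (wsubst (\<lambda>x. wsubst (pcs v Cg True) [(\<phi> x, True)]) a) (wsubst (\<lambda>x. wsubst (\<lambda>x. [(\<phi> x, True)]) (sigL L x)) a)"
    apply (rule wsubst_cong[OF _ a(1)])
    using pt gPphi gphiL unfolding gsub_def by blast
  then show "pconj VG EG v Cg (raag_induced VG EG \<phi> g) = raag_induced VG EG \<phi> (hsubst VL EL (sigL L) g)"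
    unfolding lhs rhs class_eq .
qed




lemma R_refl[simp]: "reach_in S E a a"
  by (simp add: reach_in_def)

lemma R_induct[consumes 1, case_names base step]:
  assumes "reach_in S E a b" "P a"
    "\<And>c d. reach_in S E a c \<Longrightarrow> c \<in> S \<Longrightarrow> d \<in> S \<Longrightarrow> E c d \<Longrightarrow> P c \<Longrightarrow> P d"
  shows "P b"
  using assms(1) unfolding reach_in_def
  by (induction rule: rtranclp_induct) (use assms(2,3) in \<open>auto simp: reach_in_def\<close>)

lemma R_step: "reach_in S E a b \<Longrightarrow> b \<in> S \<Longrightarrow> c \<in> S \<Longrightarrow> E b c \<Longrightarrow> reach_in S E a c"
  unfolding reach_in_def by (rule rtranclp.rtrancl_into_rtrancl) auto

lemma R_edge: "a \<in> S \<Longrightarrow> b \<in> S \<Longrightarrow> E a b \<Longrightarrow> reach_in S E a b"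
  using R_step[of S E a a b] by simp

lemma R_trans: "reach_in S E a b \<Longrightarrow> reach_in S E b c \<Longrightarrow> reach_in S E a c"
  unfolding reach_in_def by (rule rtranclp_trans)

lemma R_sym: assumes "\<And>a b. E a b \<Longrightarrow> E b a" shows "reach_in S E a b \<Longrightarrow> reach_in S E b a"
  unfolding reach_in_def
proof (induction rule: rtranclp_induct)
  case base then show ?case by simp
next
  case (step y z)
  then have "(\<lambda>a b. a \<in> S \<and> b \<in> S \<and> E a b) z y" using assms by auto
  then show ?case by (rule converse_rtranclp_into_rtranclp[OF _ step.IH])
qed

lemma R_mem2: "reach_in S E a b \<Longrightarrow> b = a \<or> b \<in> S"
  unfolding reach_in_def by (induction rule: rtranclp_induct) auto

lemma R_mem1: "reach_in S E a b \<Longrightarrow> a = b \<or> a \<in> S"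
  unfolding reach_in_def by (induction rule: converse_rtranclp_induct) auto

lemma R_mono: "S \<subseteq> S' \<Longrightarrow> reach_in S E a b \<Longrightarrow> reach_in S' E a b"
  unfolding reach_in_def by (erule rtranclp_mono[THEN predicate2D, rotated]) auto

lemma R_restrict:
  assumes "reach_in S E a b" and "\<And>z. reach_in S E a z \<Longrightarrow> z \<in> S'"
  shows "reach_in (S \<inter> S') E a b"
  using assms(1)
proof (induction rule: R_induct)
  case base then show ?case by simp
next
  case (step c d)
  have "c \<in> S'" "d \<in> S'" using assms(2) step(1) R_step[OF step(1-4)] by auto
  then show ?case using R_step[OF step(5)] step(2-4) by auto
qed

lemma R_hit:
  assumes "reach_in S E a b" and "a \<in> S - T"
  shows "reach_in (S - T) E a b \<or> (\<exists>y y'. y \<in> T \<and> y \<in> S \<and> y' \<in> S - T \<and> reach_in (S - T) E a y' \<and> E y' y)"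
  using assms(1)
proof (induction rule: R_induct)
  case base then show ?case by simp
next
  case (step c d)
  show ?case
  proof (cases "reach_in (S - T) E a c")
    case True
    have c: "c \<in> S - T" using R_mem2[OF True] assms(2) by auto
    show ?thesis
    proof (cases "d \<in> T")
      case True then show ?thesis using c step(3,4) \<open>reach_in (S - T) E a c\<close> by blast
    next
      case False then show ?thesis using R_step[OF \<open>reach_in (S - T) E a c\<close> c] step(3,4) by auto
    qed
  next
    case False then show ?thesis using step(5) by blast
  qed
qed


locale cov =
  fixes VL :: "'a set" and EL :: "'a \<Rightarrow> 'a \<Rightarrow> bool" and VG :: "'b set" and EG :: "'b \<Rightarrow> 'b \<Rightarrow> bool"
    and \<phi> :: "'a \<Rightarrow> 'b" and v :: 'b
  assumes sgL: "simple_graph VL EL" and sgG: "simple_graph VG EG"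
    and reg: "regular_covering VL EL VG EG \<phi>" and v: "v \<in> VG"
begin

lemma symL: "EL a b \<Longrightarrow> EL b a" using sgL by (auto simp: simple_graph_def)
lemma symG: "EG a b \<Longrightarrow> EG b a" using sgG by (auto simp: simple_graph_def)
lemma irrL: "\<not> EL a a" using sgL by (auto simp: simple_graph_def)
lemma irrG: "\<not> EG a a" using sgG by (auto simp: simple_graph_def)
lemma EL_V: "EL a b \<Longrightarrow> a \<in> VL \<and> b \<in> VL" using sgL by (auto simp: simple_graph_def)
lemma EG_V: "EG a b \<Longrightarrow> a \<in> VG \<and> b \<in> VG" using sgG by (auto simp: simple_graph_def)
lemma finL: "finite VL" using sgL by (auto simp: simple_graph_def)
lemma cm: "covering_map VL EL VG EG \<phi>" using reg by (simp add: regular_covering_def)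
lemma phi_surj: "\<phi> ` VL = VG" using cm by (simp add: covering_map_def)
lemma phiV: "x \<in> VL \<Longrightarrow> \<phi> x \<in> VG" using phi_surj by auto
lemma phiE: "EL x y \<Longrightarrow> EG (\<phi> x) (\<phi> y)" using cm by (simp add: covering_map_def)
lemma lkbij: "u \<in> VL \<Longrightarrow> bij_betw \<phi> (lk VL EL u) (lk VG EG (\<phi> u))"
  using cm by (simp add: covering_map_def)

lemma st_iff: "z \<in> st V E u \<longleftrightarrow> z = u \<or> (z \<in> V \<and> E u z)"
  by (auto simp: st_def lk_def)

definition U where "U = {u \<in> VL. \<phi> u = v}"
definition SS where "SS u = VL - st VL EL u"
definition Kc where "Kc u x = {y. reach_in (SS u) EL x y}"
definition outer where "outer x \<longleftrightarrow> x \<in> VL \<and> \<phi> x \<notin> st VG EG v"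
definition Ix where "Ix x = {w \<in> VL. \<forall>u\<in>U. w \<in> Kc u x}"
definition Ax where "Ax x = {u \<in> U. \<forall>u'\<in>U. u' \<noteq> u \<longrightarrow> u \<in> Kc u' x}"
definition L0 where "L0 x = {w. reach_in VL EL x w}"

lemma U_ne: "U \<noteq> {}" using v phi_surj by (auto simp: U_def)
lemma finU: "finite U" using finL by (auto simp: U_def)

lemma outer_SS: "outer x \<Longrightarrow> u \<in> U \<Longrightarrow> x \<in> SS u"
  using phiE phiV by (auto simp: outer_def U_def SS_def st_iff)

lemma U_SS: "u \<in> U \<Longrightarrow> u' \<in> U \<Longrightarrow> u \<noteq> u' \<Longrightarrow> u \<in> SS u'"
  using phiE irrG by (fastforce simp: U_def SS_def st_iff)

lemma st_disj:
  assumes u: "u \<in> U" and u': "u' \<in> U" and ne: "u \<noteq> u'" and z: "z \<in> st VL EL u"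
  shows "z \<notin> st VL EL u'"
proof
  assume z': "z \<in> st VL EL u'"
  show False
  proof (cases "z = u")
    case True then show False using U_SS[OF u u' ne] z' by (simp add: SS_def)
  next
    case False
    then have zl: "z \<in> VL" "EL u z" using z by (auto simp: st_iff)
    show False
    proof (cases "z = u'")
      case True
      then have "EG v v" using zl phiE[of u u'] u u' by (simp add: U_def)
      then show False using irrG by blast
    next
      case False
      then have "EL u' z" using z' by (auto simp: st_iff)
      then have "u \<in> lk VL EL z" "u' \<in> lk VL EL z" using zl u u' symL by (auto simp: lk_def U_def)
      moreover have "inj_on \<phi> (lk VL EL z)" using lkbij[OF zl(1)] by (simp add: bij_betw_def)
      ultimately show False using u u' ne by (auto simp: U_def inj_on_def)
    qed
  qed
qed

lemma st_VL: "u \<in> VL \<Longrightarrow> z \<in> st VL EL u \<Longrightarrow> z \<in> VL"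
  by (auto simp: st_iff)

lemma st_SS: assumes "u \<in> U" "u' \<in> U" "u \<noteq> u'" "z \<in> st VL EL u" shows "z \<in> SS u'"
proof -
  have "z \<notin> st VL EL u'" by (rule st_disj[OF assms])
  moreover have "z \<in> VL" using st_VL assms(1,4) by (auto simp: U_def)
  ultimately show ?thesis by (simp add: SS_def)
qed

lemma F2: assumes "u \<in> U" "u' \<in> U" "u \<noteq> u'" "z \<in> st VL EL u" shows "reach_in (SS u') EL z u"
proof (cases "z = u")
  case True then show ?thesis by simp
next
  case False
  then have "EL z u" using assms(4) symL by (auto simp: st_iff)
  moreover have "z \<in> SS u'" "u \<in> SS u'" using st_SS[OF assms] U_SS[OF assms(1-3)] by auto
  ultimately show ?thesis by (simp add: R_edge)
qed

lemma Kc_self: "x \<in> SS u \<Longrightarrow> x \<in> Kc u x" by (simp add: Kc_def)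

lemma Kc_SS: "x \<in> SS u \<Longrightarrow> Kc u x \<subseteq> SS u"
  using R_mem2 by (fastforce simp: Kc_def)

lemma Kc_eq: assumes "x \<in> SS u" "y \<in> Kc u x" shows "Kc u y = Kc u x"
proof -
  have xy: "reach_in (SS u) EL x y" "reach_in (SS u) EL y x"
    using assms R_sym[where E=EL, OF symL] by (auto simp: Kc_def)
  show ?thesis using R_trans[OF xy(1)] R_trans[OF xy(2)] by (auto simp: Kc_def)
qed

lemma SS_VL: "SS u \<subseteq> VL" by (auto simp: SS_def)

lemma Kc_L0: "Kc u x \<subseteq> L0 x"
  using R_mono[OF SS_VL] by (auto simp: Kc_def L0_def)

lemma uK: "u \<in> U \<Longrightarrow> x \<in> SS u \<Longrightarrow> u \<notin> Kc u x"
  using Kc_SS by (fastforce simp: SS_def st_def)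

lemma Kc_sym: "y \<in> Kc u x \<Longrightarrow> x \<in> Kc u y"
  using R_sym[where E=EL, OF symL] by (auto simp: Kc_def)

lemma L0_sym: "y \<in> L0 x \<Longrightarrow> x \<in> L0 y"
  using R_sym[where E=EL, OF symL] by (auto simp: L0_def)

lemma R1:
  assumes x: "outer x" and u: "u \<in> U" and w: "w \<in> L0 x" and wK: "w \<notin> Kc u x"
  shows "\<exists>y y'. y \<in> st VL EL u \<and> y' \<in> Kc u x \<and> EL y' y"
proof -
  have "x \<in> VL - st VL EL u" using outer_SS[OF x u] by (simp add: SS_def)
  from R_hit[OF _ this] w have
    "reach_in (VL - st VL EL u) EL x w \<or> (\<exists>y y'. y \<in> st VL EL u \<and> y \<in> VL \<and> y' \<in> VL - st VL EL u \<and>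
       reach_in (VL - st VL EL u) EL x y' \<and> EL y' y)" by (simp add: L0_def)
  then show ?thesis using wK by (auto simp: Kc_def SS_def)
qed

lemma R0:
  assumes x: "outer x" and u: "u \<in> U" and w: "w \<in> L0 x" and wK: "w \<notin> Kc u x"
  shows "u \<in> L0 x"
proof -
  obtain y y' where y: "y \<in> st VL EL u" "y' \<in> Kc u x" "EL y' y" using R1[OF assms] by blast
  have "y' \<in> L0 x" using y Kc_L0 by auto
  then have "y \<in> L0 x" using y(3) EL_V R_step by (fastforce simp: L0_def)
  moreover have "reach_in VL EL y u"
    using y(1) u symL EL_V by (auto simp: st_iff U_def intro: R_edge)
  ultimately show ?thesis using R_trans by (auto simp: L0_def)
qed

lemma Ttrans:
  assumes x: "outer x" and u1: "u1 \<in> U" and u2: "u2 \<in> U" and ne: "u1 \<noteq> u2"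
    and h1: "u1 \<notin> Kc u2 x" and h2: "z \<notin> Kc u1 x"
  shows "z \<notin> Kc u2 x"
proof
  assume z: "z \<in> Kc u2 x"
  have xs: "x \<in> SS u2 - st VL EL u1" using outer_SS[OF x u1] outer_SS[OF x u2] by (auto simp: SS_def)
  from R_hit[OF _ xs] z have
    "reach_in (SS u2 - st VL EL u1) EL x z \<or> (\<exists>y y'. y \<in> st VL EL u1 \<and> y \<in> SS u2 \<and> y' \<in> SS u2 - st VL EL u1 \<and>
       reach_in (SS u2 - st VL EL u1) EL x y' \<and> EL y' y)" by (simp add: Kc_def)
  then show False
  proof
    assume "reach_in (SS u2 - st VL EL u1) EL x z"
    then have "reach_in (SS u1) EL x z" by (rule R_mono[rotated]) (auto simp: SS_def)
    then show False using h2 by (simp add: Kc_def)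
  next
    assume "\<exists>y y'. y \<in> st VL EL u1 \<and> y \<in> SS u2 \<and> y' \<in> SS u2 - st VL EL u1 \<and>
       reach_in (SS u2 - st VL EL u1) EL x y' \<and> EL y' y"
    then obtain y y' where y: "y \<in> st VL EL u1" "y \<in> SS u2" "y' \<in> SS u2" "reach_in (SS u2 - st VL EL u1) EL x y'" "EL y' y"
      by blast
    have r: "reach_in (SS u2) EL x y'" using y(4) by (rule R_mono[rotated]) auto
    have "reach_in (SS u2) EL x y" by (rule R_step[where E=EL, OF r y(3) y(2) y(5)])
    then have "reach_in (SS u2) EL x u1" by (rule R_trans[OF _ F2[OF u1 u2 ne y(1)]])
    then show False using h1 by (simp add: Kc_def)
  qed
qed

lemma Asym:
  assumes x: "outer x" and u1: "u1 \<in> U" and u2: "u2 \<in> U" and ne: "u1 \<noteq> u2" and L: "u1 \<in> L0 x"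
  shows "u1 \<in> Kc u2 x \<or> u2 \<in> Kc u1 x"
proof -
  let ?T = "st VL EL u1 \<union> st VL EL u2"
  have xs: "x \<in> VL - ?T" using outer_SS[OF x u1] outer_SS[OF x u2] by (auto simp: SS_def)
  from R_hit[OF _ xs] L have
    "reach_in (VL - ?T) EL x u1 \<or> (\<exists>y y'. y \<in> ?T \<and> y \<in> VL \<and> y' \<in> VL - ?T \<and>
       reach_in (VL - ?T) EL x y' \<and> EL y' y)" by (simp add: L0_def)
  then show ?thesis
  proof
    assume "reach_in (VL - ?T) EL x u1"
    from R_mem2[OF this] have "u1 = x \<or> u1 \<in> VL - ?T" .
    then show ?thesis using xs by (auto simp: st_def)
  next
    assume "\<exists>y y'. y \<in> ?T \<and> y \<in> VL \<and> y' \<in> VL - ?T \<and> reach_in (VL - ?T) EL x y' \<and> EL y' y"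
    then obtain y y' where y: "y \<in> ?T" "y' \<in> VL - ?T" "reach_in (VL - ?T) EL x y'" "EL y' y" by blast
    show ?thesis
    proof (cases "y \<in> st VL EL u1")
      case True
      have "reach_in (SS u2) EL x y'" using y(3) by (rule R_mono[rotated]) (auto simp: SS_def)
      moreover have "y' \<in> SS u2" "y \<in> SS u2" using y(2) st_SS[OF u1 u2 ne True] by (auto simp: SS_def)
      ultimately have "reach_in (SS u2) EL x y" using R_step[where E=EL] y(4) by metis
      then have "reach_in (SS u2) EL x u1" by (rule R_trans[OF _ F2[OF u1 u2 ne True]])
      then show ?thesis by (simp add: Kc_def)
    next
      case False
      then have yy: "y \<in> st VL EL u2" using y(1) by auto
      have "reach_in (SS u1) EL x y'" using y(3) by (rule R_mono[rotated]) (auto simp: SS_def)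
      moreover have "y' \<in> SS u1" "y \<in> SS u1" using y(2) st_SS[OF u2 u1 ne[symmetric] yy] by (auto simp: SS_def)
      ultimately have "reach_in (SS u1) EL x y" using R_step[where E=EL] y(4) by metis
      then have "reach_in (SS u1) EL x u2" by (rule R_trans[OF _ F2[OF u2 u1 ne[symmetric] yy]])
      then show ?thesis by (simp add: Kc_def)
    qed
  qed
qed

end

context cov
begin

lemma outer_VL: "outer x \<Longrightarrow> x \<in> VL" by (simp add: outer_def)

lemma Kc_finite: "finite (Kc u x)"
proof -
  have "Kc u x \<subseteq> insert x VL" using R_mem2 SS_VL by (fastforce simp: Kc_def)
  then show ?thesis using finL finite_subset by blast
qed

lemma Ex_A:
  assumes x: "outer x" and w: "outer w" and wL: "w \<in> L0 x" and wI: "w \<notin> Ix x"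
  shows "\<exists>u\<in>Ax x. w \<notin> Kc u x"
proof -
  define SW where "SW = {u \<in> U. w \<notin> Kc u x}"
  have ne: "SW \<noteq> {}" using wI outer_VL[OF w] by (auto simp: SW_def Ix_def)
  have fin: "finite SW" using finU by (auto simp: SW_def)
  define f where "f = (\<lambda>u. card (Kc u w))"
  obtain u where uS: "u \<in> SW" and umax: "\<And>u'. u' \<in> SW \<Longrightarrow> f u' \<le> f u"
  proof -
    have "Max (f ` SW) \<in> f ` SW" using ne fin by (intro Max_in) auto
    then obtain u where "u \<in> SW" "f u = Max (f ` SW)" by auto
    moreover have "f u' \<le> Max (f ` SW)" if "u' \<in> SW" for u' using fin that by (intro Max_ge) auto
    ultimately show ?thesis using that by metis
  qed
  have u: "u \<in> U" and wu: "w \<notin> Kc u x" using uS by (auto simp: SW_def)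
  have "u \<in> Ax x"
    unfolding Ax_def
  proof (intro CollectI conjI ballI impI u)
    fix u' assume u': "u' \<in> U" and ne: "u' \<noteq> u"
    show "u \<in> Kc u' x"
    proof (rule ccontr)
      assume h: "u \<notin> Kc u' x"
      have wu': "w \<notin> Kc u' x" by (rule Ttrans[OF x u u' ne[symmetric] h wu])
      then have u'S: "u' \<in> SW" using u' by (simp add: SW_def)
      have uL: "u \<in> L0 x" by (rule R0[OF x u wL wu])
      have u'K: "u' \<in> Kc u x" using Asym[OF x u u' ne[symmetric] uL] h by blast
      have xS: "x \<in> SS u" and wS: "w \<in> SS u" and wS': "w \<in> SS u'"
        using outer_SS x w u u' by auto
      have disj: "z \<notin> st VL EL u'" if z: "z \<in> Kc u w" for z
      proof
        assume zs: "z \<in> st VL EL u'"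
        have "reach_in (SS u) EL z u'" by (rule F2[OF u' u ne zs])
        then have "u' \<in> Kc u w" using z R_trans by (auto simp: Kc_def)
        then have "Kc u u' = Kc u w" by (rule Kc_eq[OF wS])
        moreover have "Kc u u' = Kc u x" by (rule Kc_eq[OF xS u'K])
        ultimately show False using Kc_self[OF wS] wu by simp
      qed
      have sub: "Kc u w \<subseteq> Kc u' w"
      proof
        fix z assume z: "z \<in> Kc u w"
        have "reach_in (SS u \<inter> SS u') EL w z"
        proof (rule R_restrict)
          show "reach_in (SS u) EL w z" using z by (simp add: Kc_def)
        next
          fix z' assume "reach_in (SS u) EL w z'"
          then have "z' \<in> Kc u w" by (simp add: Kc_def)
          then show "z' \<in> SS u'" using disj Kc_SS[OF wS] by (auto simp: SS_def)
        qed
        then show "z \<in> Kc u' w" by (auto simp: Kc_def intro: R_mono[rotated])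
      qed
      have "x \<in> L0 w" using L0_sym[OF wL] .
      moreover have "x \<notin> Kc u w" using wu Kc_sym by blast
      ultimately obtain y y' where y: "y \<in> st VL EL u" "y' \<in> Kc u w" "EL y' y"
        using R1[OF w u] by blast
      have r: "reach_in (SS u') EL w y'" using sub y(2) by (auto simp: Kc_def)
      have ys: "y \<in> SS u'" by (rule st_SS[OF u u' ne[symmetric] y(1)])
      have y's: "y' \<in> SS u'" using Kc_SS[OF wS'] sub y(2) by auto
      have "reach_in (SS u') EL w y" by (rule R_step[where E=EL, OF r y's ys y(3)])
      then have "reach_in (SS u') EL w u" by (rule R_trans[OF _ F2[OF u u' ne[symmetric] y(1)]])
      then have uin: "u \<in> Kc u' w" by (simp add: Kc_def)
      have "u \<notin> Kc u w" by (rule uK[OF u wS])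
      then have "Kc u w \<subset> Kc u' w" using sub uin by blast
      then have "f u < f u'" unfolding f_def by (rule psubset_card_mono[OF Kc_finite])
      then show False using umax[OF u'S] by simp
    qed
  qed
  then show ?thesis using wu by blast
qed

lemma Un_A:
  assumes x: "outer x" and w: "outer w" and wL: "w \<in> L0 x"
    and u1: "u1 \<in> Ax x" and u2: "u2 \<in> Ax x" and w1: "w \<notin> Kc u1 x" and w2: "w \<notin> Kc u2 x"
  shows "u1 = u2"
proof (rule ccontr)
  assume ne: "u1 \<noteq> u2"
  have u1U: "u1 \<in> U" and u2U: "u2 \<in> U" and a1: "u1 \<in> Kc u2 x" and a2: "u2 \<in> Kc u1 x"
    using u1 u2 ne by (auto simp: Ax_def)
  have xS1: "x \<in> SS u1" and xS2: "x \<in> SS u2" and wS1: "w \<in> SS u1" and wS2: "w \<in> SS u2"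
    using outer_SS x w u1U u2U by auto
  have "x \<in> L0 w" using L0_sym[OF wL] .
  moreover have "x \<notin> Kc u1 w" using w1 Kc_sym by blast
  ultimately obtain y y' where y: "y \<in> st VL EL u1" "y' \<in> Kc u1 w" "EL y' y"
    using R1[OF w u1U] by blast
  show False
  proof (cases "\<exists>z\<in>Kc u1 w. z \<in> st VL EL u2")
    case True
    then obtain z where z: "z \<in> Kc u1 w" "z \<in> st VL EL u2" by blast
    have "reach_in (SS u1) EL z u2" by (rule F2[OF u2U u1U ne[symmetric] z(2)])
    then have "u2 \<in> Kc u1 w" using z(1) R_trans by (auto simp: Kc_def)
    then have "Kc u1 u2 = Kc u1 w" by (rule Kc_eq[OF wS1])
    moreover have "Kc u1 u2 = Kc u1 x" by (rule Kc_eq[OF xS1 a2])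
    ultimately show False using Kc_self[OF wS1] w1 by simp
  next
    case False
    have "reach_in (SS u1 \<inter> SS u2) EL w y'"
    proof (rule R_restrict)
      show "reach_in (SS u1) EL w y'" using y(2) by (simp add: Kc_def)
    next
      fix z' assume "reach_in (SS u1) EL w z'"
      then have "z' \<in> Kc u1 w" by (simp add: Kc_def)
      then show "z' \<in> SS u2" using False Kc_SS[OF wS1] by (auto simp: SS_def)
    qed
    then have r: "reach_in (SS u2) EL w y'" by (rule R_mono[rotated]) auto
    have y's: "y' \<in> SS u2" using R_mem2[OF r] wS2 by auto
    have ys: "y \<in> SS u2" by (rule st_SS[OF u1U u2U ne y(1)])
    have "reach_in (SS u2) EL w y" by (rule R_step[where E=EL, OF r y's ys y(3)])
    then have "reach_in (SS u2) EL w u1" by (rule R_trans[OF _ F2[OF u1U u2U ne y(1)]])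
    then have "u1 \<in> Kc u2 w" by (simp add: Kc_def)
    then have "Kc u2 u1 = Kc u2 w" by (rule Kc_eq[OF wS2])
    moreover have "Kc u2 u1 = Kc u2 x" by (rule Kc_eq[OF xS2 a1])
    ultimately show False using Kc_self[OF wS2] w2 by simp
  qed
qed

end




lemma kL_append: "kL (L1 @ L2) w = kL L1 w + kL L2 w"
proof (induction L1)
  case Nil then show ?case by simp
next
  case (Cons a L1)
  obtain u C e where "a = (u, C, e)" by (cases a) auto
  then show ?case using Cons by simp
qed

lemma kL_map: "kL (map (\<lambda>u. (u, f u, True)) xs) w = int (length (filter (\<lambda>u. w \<in> f u) xs))"
  by (induction xs) auto

lemma kL_rep: "kL (replicate n (u, C, e)) w = int n * (if w \<in> C then (if e then 1 else -1) else 0)"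
  by (induction n) (auto simp: algebra_simps)

lemma kL_concat: "kL (concat Ls) w = sum_list (map (\<lambda>L. kL L w) Ls)"
  by (induction Ls) (auto simp: kL_append)

context cov
begin

definition ustar where "ustar = (SOME u. u \<in> U)"
definition alist where "alist x = (SOME xs. distinct xs \<and> set xs = Ax x)"
definition cval where "cval x = 1 - int (card (Ax x))"
definition opsx where "opsx x = map (\<lambda>u. (u, Kc u x, True)) (alist x)
   @ replicate (nat \<bar>cval x\<bar>) (ustar, L0 x - st VL EL ustar, 0 \<le> cval x)"

lemma ustar: "ustar \<in> U" using U_ne by (simp add: ustar_def some_in_eq)

lemma Ax_U: "Ax x \<subseteq> U" by (auto simp: Ax_def)

lemma alist: "distinct (alist x) \<and> set (alist x) = Ax x"
proof -
  have "finite (Ax x)" using finU Ax_U finite_subset by blast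
  then have "\<exists>xs. distinct xs \<and> set xs = Ax x" using finite_distinct_list by blast
  then show ?thesis unfolding alist_def by (rule someI_ex)
qed

lemma kL_opsx:
  assumes x: "outer x" and w: "outer w"
  shows "kL (opsx x) w = (if w \<in> Ix x then 1 else 0)"
proof -
  have wnst: "w \<notin> st VL EL ustar" using outer_SS[OF w ustar] by (simp add: SS_def)
  have rep: "kL (replicate (nat \<bar>cval x\<bar>) (ustar, L0 x - st VL EL ustar, 0 \<le> cval x)) w
      = (if w \<in> L0 x then cval x else 0)"
    using wnst by (simp add: kL_rep)
  have fin: "finite (Ax x)" using finU Ax_U finite_subset by blast
  have map: "kL (map (\<lambda>u. (u, Kc u x, True)) (alist x)) w = int (card {u \<in> Ax x. w \<in> Kc u x})"
    unfolding kL_map distinct_length_filter[OF alist[THEN conjunct1]] alist[THEN conjunct2]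
    by (simp add: Collect_conj_eq Int_commute)
  have tot: "kL (opsx x) w = int (card {u \<in> Ax x. w \<in> Kc u x}) + (if w \<in> L0 x then cval x else 0)"
    unfolding opsx_def kL_append map rep ..
  show ?thesis
  proof (cases "w \<in> Ix x")
    case True
    then have "{u \<in> Ax x. w \<in> Kc u x} = Ax x" using Ax_U by (auto simp: Ix_def)
    moreover have "w \<in> L0 x" using True ustar Kc_L0 by (auto simp: Ix_def)
    ultimately show ?thesis using tot True by (simp add: cval_def)
  next
    case nI: False
    show ?thesis
    proof (cases "w \<in> L0 x")
      case True
      obtain u0 where u0: "u0 \<in> Ax x" "w \<notin> Kc u0 x" using Ex_A[OF x w True nI] by blast
      have "{u \<in> Ax x. w \<in> Kc u x} = Ax x - {u0}"
        using Un_A[OF x w True u0(1)] u0 by blast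
      then have "card {u \<in> Ax x. w \<in> Kc u x} = card (Ax x) - 1" using u0 fin by simp
      moreover have "card (Ax x) > 0" using u0 fin card_gt_0_iff by blast
      ultimately show ?thesis using tot True nI by (simp add: cval_def of_nat_diff)
    next
      case False
      then have "{u \<in> Ax x. w \<in> Kc u x} = {}" using Kc_L0 by blast
      then show ?thesis using tot False nI by (simp only: card.empty) simp
    qed
  qed
qed

lemma opsx_valid:
  assumes x: "outer x"
  shows "\<forall>op\<in>set (opsx x). valid_op VL EL op \<and> \<phi> (fst op) = v"
proof
  fix op assume op: "op \<in> set (opsx x)"
  show "valid_op VL EL op \<and> \<phi> (fst op) = v"
  proof (cases "op \<in> set (map (\<lambda>u. (u, Kc u x, True)) (alist x))")
    case True
    then obtain u where u: "u \<in> Ax x" "op = (u, Kc u x, True)" using alist by auto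
    have uU: "u \<in> U" using u Ax_U by auto
    have xS: "x \<in> SS u" by (rule outer_SS[OF x uU])
    have cl: "b = u \<or> EL u b" if a: "a \<in> Kc u x" and b: "b \<in> VL" and ab: "EL a b" and bn: "b \<notin> Kc u x" for a b
    proof (rule ccontr)
      assume "\<not> (b = u \<or> EL u b)"
      then have bS: "b \<in> SS u" using b by (auto simp: SS_def st_iff)
      have aS: "a \<in> SS u" using Kc_SS[OF xS] a by auto
      have "reach_in (SS u) EL x b" using R_step[where E=EL, OF _ aS bS ab] a by (simp add: Kc_def)
      then show False using bn by (simp add: Kc_def)
    qed
    show ?thesis using u uU uK[OF uU xS] cl by (auto simp: valid_op_def U_def)
  next
    case False
    then have op: "op = (ustar, L0 x - st VL EL ustar, 0 \<le> cval x)" using op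
      by (auto simp: opsx_def split: if_splits)
    have cl: "b = ustar \<or> EL ustar b" if a: "a \<in> L0 x - st VL EL ustar" and b: "b \<in> VL" and ab: "EL a b"
      and bn: "b \<notin> L0 x - st VL EL ustar" for a b
    proof -
      have "a \<in> VL" using EL_V ab by blast
      then have "b \<in> L0 x" using a b ab R_step[where E=EL] by (auto simp: L0_def)
      then show ?thesis using bn by (auto simp: st_iff)
    qed
    show ?thesis using op ustar cl by (auto simp: valid_op_def U_def st_def)
  qed
qed

end

context cov
begin

lemma Ix_self: "outer x \<Longrightarrow> x \<in> Ix x"
  using Kc_self outer_SS outer_VL by (auto simp: Ix_def)

lemma Ix_eq:
  assumes x: "outer x" and y: "outer y" and zx: "z \<in> Ix x" and zy: "z \<in> Ix y"
  shows "Ix x = Ix y"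
proof -
  have "Kc u x = Kc u y" if u: "u \<in> U" for u
  proof -
    have "Kc u z = Kc u x" using Kc_eq[OF outer_SS[OF x u]] zx u by (auto simp: Ix_def)
    moreover have "Kc u z = Kc u y" using Kc_eq[OF outer_SS[OF y u]] zy u by (auto simp: Ix_def)
    ultimately show ?thesis by simp
  qed
  then show ?thesis by (auto simp: Ix_def)
qed

lemma B1:
  assumes b0: "outer b0" and z: "z \<in> Ix b0"
  shows "\<phi> z \<notin> st VG EG v"
proof
  assume st: "\<phi> z \<in> st VG EG v"
  have zV: "z \<in> VL" and zK: "\<And>u. u \<in> U \<Longrightarrow> z \<in> Kc u b0" using z by (auto simp: Ix_def)
  show False
  proof (cases "\<phi> z = v")
    case True
    then have zU: "z \<in> U" using zV by (simp add: U_def)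
    then show False using zK[OF zU] uK[OF zU outer_SS[OF b0 zU]] by simp
  next
    case False
    then have "EG v (\<phi> z)" using st by (auto simp: st_iff)
    then have "v \<in> lk VG EG (\<phi> z)" using v symG by (auto simp: lk_def)
    then have "v \<in> \<phi> ` lk VL EL z" using lkbij[OF zV] by (simp add: bij_betw_def)
    then obtain u where u: "u \<in> VL" "EL z u" "\<phi> u = v" by (auto simp: lk_def)
    then have uU: "u \<in> U" by (simp add: U_def)
    have "z \<in> SS u" using Kc_SS[OF outer_SS[OF b0 uU]] zK[OF uU] by auto
    moreover have "z \<in> st VL EL u" using u zV symL by (auto simp: st_iff)
    ultimately show False by (simp add: SS_def)
  qed
qed

lemma B2:
  assumes b0: "outer b0" and a: "a \<in> \<phi> ` Ix b0" and b: "b \<in> VG" and ab: "EG a b" and bn: "b \<notin> \<phi> ` Ix b0"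
  shows "b = v \<or> EG v b"
proof (rule ccontr)
  assume nb: "\<not> (b = v \<or> EG v b)"
  obtain at where at: "at \<in> Ix b0" "a = \<phi> at" using a by auto
  have atV: "at \<in> VL" using at by (simp add: Ix_def)
  have "b \<in> lk VG EG (\<phi> at)" using b ab at by (simp add: lk_def)
  then have "b \<in> \<phi> ` lk VL EL at" using lkbij[OF atV] by (simp add: bij_betw_def)
  then obtain bt where bt: "bt \<in> VL" "EL at bt" "\<phi> bt = b" by (auto simp: lk_def)
  have obt: "outer bt" using bt nb by (auto simp: outer_def st_iff)
  have "bt \<in> Kc u b0" if u: "u \<in> U" for u
  proof -
    have aK: "at \<in> Kc u b0" using at u by (simp add: Ix_def)
    have aS: "at \<in> SS u" using Kc_SS[OF outer_SS[OF b0 u]] aK by auto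
    have bS: "bt \<in> SS u" by (rule outer_SS[OF obt u])
    show ?thesis using R_step[where E=EL, OF _ aS bS bt(2)] aK by (simp add: Kc_def)
  qed
  then have "bt \<in> Ix b0" using bt by (simp add: Ix_def)
  then show False using bn bt by auto
qed

lemma deck_SS:
  assumes mu: "\<mu> \<in> deck VL EL \<phi>" and u: "u \<in> VL" and c: "c \<in> SS u"
  shows "\<mu> c \<in> SS (\<mu> u)"
proof -
  have bij: "bij_betw \<mu> VL VL" and iff: "\<And>x y. x \<in> VL \<Longrightarrow> y \<in> VL \<Longrightarrow> EL x y \<longleftrightarrow> EL (\<mu> x) (\<mu> y)"
    using mu by (auto simp: deck_def graph_aut_def)
  have cV: "c \<in> VL" and cn: "c \<noteq> u" "\<not> EL u c" using c by (auto simp: SS_def st_iff)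
  have "\<mu> c \<in> VL" using bij cV by (auto simp: bij_betw_def)
  moreover have "\<mu> c \<noteq> \<mu> u" using bij cV u cn by (auto simp: bij_betw_def inj_on_def)
  moreover have "\<not> EL (\<mu> u) (\<mu> c)" using iff[OF u cV] cn by simp
  ultimately show ?thesis by (simp add: SS_def st_iff)
qed

lemma deck_reach:
  assumes mu: "\<mu> \<in> deck VL EL \<phi>" and u: "u \<in> VL" and r: "reach_in (SS u) EL a b"
  shows "reach_in (SS (\<mu> u)) EL (\<mu> a) (\<mu> b)"
  using r
proof (induction rule: R_induct)
  case base then show ?case by simp
next
  case (step c d)
  have iff: "\<And>x y. x \<in> VL \<Longrightarrow> y \<in> VL \<Longrightarrow> EL x y \<longleftrightarrow> EL (\<mu> x) (\<mu> y)"
    using mu by (auto simp: deck_def graph_aut_def)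
  have "EL (\<mu> c) (\<mu> d)" using iff step(2,3,4) SS_VL by blast
  then show ?case using R_step[where E=EL, OF step(5) deck_SS[OF mu u step(2)] deck_SS[OF mu u step(3)]] by simp
qed

lemma Dk:
  assumes b0: "outer b0" and x: "x \<in> VL" and px: "\<phi> x \<in> \<phi> ` Ix b0" and z: "z \<in> Ix x"
  shows "\<phi> z \<in> \<phi> ` Ix b0"
proof -
  obtain y where y: "y \<in> Ix b0" "\<phi> x = \<phi> y" using px by auto
  have yV: "y \<in> VL" using y by (simp add: Ix_def)
  obtain \<mu> where mu: "\<mu> \<in> deck VL EL \<phi>" "\<mu> x = y"
    using reg x yV y(2) by (auto simp: regular_covering_def)
  have bij: "bij_betw \<mu> VL VL" and phm: "\<And>a. a \<in> VL \<Longrightarrow> \<phi> (\<mu> a) = \<phi> a"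
    using mu by (auto simp: deck_def graph_aut_def)
  have zV: "z \<in> VL" using z by (simp add: Ix_def)
  have "\<mu> z \<in> Kc u' b0" if u': "u' \<in> U" for u'
  proof -
    have "u' \<in> \<mu> ` VL" using bij u' by (auto simp: bij_betw_def U_def)
    then obtain u where u: "u \<in> VL" "\<mu> u = u'" by auto
    have uU: "u \<in> U" using u u' phm by (auto simp: U_def)
    have "reach_in (SS u) EL x z" using z uU by (simp add: Ix_def Kc_def)
    from deck_reach[OF mu(1) u(1) this] have "\<mu> z \<in> Kc u' y" using u mu by (simp add: Kc_def)
    moreover have "Kc u' y = Kc u' b0" using Kc_eq[OF outer_SS[OF b0 u']] y u' by (auto simp: Ix_def)
    ultimately show ?thesis by simp
  qed
  moreover have "\<mu> z \<in> VL" using bij zV by (auto simp: bij_betw_def)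
  ultimately have "\<mu> z \<in> Ix b0" by (simp add: Ix_def)
  moreover have "\<phi> (\<mu> z) = \<phi> z" using phm zV by simp
  ultimately show ?thesis by (metis image_eqI)
qed

definition Pset where "Pset b0 = {x \<in> VL. \<phi> x \<in> \<phi> ` Ix b0}"
definition Xs where "Xs b0 = Ix ` Pset b0"
definition xl where "xl b0 = (SOME xs. distinct xs \<and> set xs = Xs b0)"
definition rep where "rep b0 X = (SOME x. x \<in> Pset b0 \<and> Ix x = X)"
definition Lall where "Lall b0 = concat (map (\<lambda>X. opsx (rep b0 X)) (xl b0))"

lemma P_outer: "outer b0 \<Longrightarrow> x \<in> Pset b0 \<Longrightarrow> outer x"
  using B1 by (fastforce simp: Pset_def outer_def)

lemma Xs_fin: "finite (Xs b0)"
  using finL by (auto simp: Xs_def Pset_def)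

lemma xl: "distinct (xl b0) \<and> set (xl b0) = Xs b0"
proof -
  have "\<exists>xs. distinct xs \<and> set xs = Xs b0" using finite_distinct_list[OF Xs_fin] by blast
  then show ?thesis unfolding xl_def by (rule someI_ex)
qed

lemma rep: "X \<in> Xs b0 \<Longrightarrow> rep b0 X \<in> Pset b0 \<and> Ix (rep b0 X) = X"
  unfolding rep_def by (rule someI_ex) (auto simp: Xs_def)

lemma Lall_valid:
  assumes b0: "outer b0"
  shows "\<forall>op\<in>set (Lall b0). valid_op VL EL op \<and> \<phi> (fst op) = v"
proof
  fix op assume "op \<in> set (Lall b0)"
  then obtain X where X: "X \<in> Xs b0" "op \<in> set (opsx (rep b0 X))" using xl by (auto simp: Lall_def)
  have "outer (rep b0 X)" using rep[OF X(1)] P_outer[OF b0] by blast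
  then show "valid_op VL EL op \<and> \<phi> (fst op) = v" using opsx_valid X(2) by blast
qed

lemma kL_Lall:
  assumes b0: "outer b0" and w: "outer w"
  shows "kL (Lall b0) w = (if w \<in> Pset b0 then 1 else 0)"
proof -
  have "kL (Lall b0) w = sum_list (map (\<lambda>X. kL (opsx (rep b0 X)) w) (xl b0))"
    by (simp add: Lall_def kL_concat o_def)
  also have "\<dots> = (\<Sum>X\<in>Xs b0. kL (opsx (rep b0 X)) w)"
    using xl sum_list_distinct_conv_sum_set by metis
  also have "\<dots> = (\<Sum>X\<in>Xs b0. if w \<in> X then 1 else 0)"
  proof (rule sum.cong[OF refl])
    fix X assume X: "X \<in> Xs b0"
    have "outer (rep b0 X)" using rep[OF X] P_outer[OF b0] by blast
    then show "kL (opsx (rep b0 X)) w = (if w \<in> X then 1 else 0)"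
      using kL_opsx[OF _ w] rep[OF X] by simp
  qed
  also have "\<dots> = (if w \<in> Pset b0 then 1 else 0)"
  proof (cases "w \<in> Pset b0")
    case True
    have iff: "(w \<in> X) = (X = Ix w)" if X: "X \<in> Xs b0" for X
    proof -
      obtain x where x: "x \<in> Pset b0" "X = Ix x" using X by (auto simp: Xs_def)
      have ox: "outer x" using P_outer[OF b0 x(1)] .
      show ?thesis using Ix_eq[OF ox w _ Ix_self[OF w]] Ix_self[OF w] x by auto
    qed
    have "Ix w \<in> Xs b0" using True by (simp add: Xs_def)
    then show ?thesis using True Xs_fin by (simp add: iff cong: sum.cong)
  next
    case False
    have "w \<notin> X" if X: "X \<in> Xs b0" for X
    proof
      assume wX: "w \<in> X"
      obtain x where x: "x \<in> Pset b0" "X = Ix x" using X by (auto simp: Xs_def)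
      have "\<phi> w \<in> \<phi> ` Ix b0" using Dk[OF b0 _ _ ] x wX by (auto simp: Pset_def)
      then show False using False outer_VL[OF w] by (simp add: Pset_def)
    qed
    then show ?thesis using False by simp
  qed
  finally show ?thesis .
qed

end

theorem proposition3p8:
  fixes VL :: "'a set" and EL :: "'a \<Rightarrow> 'a \<Rightarrow> bool"
    and VG :: "'b set" and EG :: "'b \<Rightarrow> 'b \<Rightarrow> bool"
    and \<phi> :: "'a \<Rightarrow> 'b" and v :: 'b and B :: "'b set" and Bt :: "'a set"
  assumes "simple_graph VL EL" and "simple_graph VG EG"
    and "regular_covering VL EL VG EG \<phi>"
    and "v \<in> VG"
    and "component (VG - st VG EG v) EG B"
    and "component {u \<in> VL. \<phi> u \<in> B} EL Bt"
  shows "liftable VL EL VG EG \<phi> (pconj VG EG v (bar_set VL EL \<phi> v Bt))"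
proof -
  interpret cov VL EL VG EG \<phi> v using assms(1-4) by unfold_locales
  obtain c0 where c0: "c0 \<in> VG - st VG EG v" "B = {y. reach_in (VG - st VG EG v) EG c0 y}"
    using assms(5) by (auto simp: component_def)
  define BL where "BL = {u \<in> VL. \<phi> u \<in> B}"
  obtain b0 where b0: "b0 \<in> BL" "Bt = {y. reach_in BL EL b0 y}"
    using assms(6) by (auto simp: component_def BL_def)
  have Bsub: "B \<subseteq> VG - st VG EG v" using c0 R_mem2 by fastforce
  have BLo: "outer x" if "x \<in> BL" for x using that Bsub by (auto simp: outer_def BL_def)
  have ob0: "outer b0" using BLo b0 by blast
  have cc: "comp_containing VL EL u Bt = Kc u b0" if u: "u \<in> U" for u
    unfolding comp_containing_def
  proof (rule the_equality)
    have b0S: "b0 \<in> SS u" by (rule outer_SS[OF ob0 u])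
    have "Bt \<subseteq> Kc u b0"
    proof
      fix y assume "y \<in> Bt"
      then have "reach_in BL EL b0 y" using b0 by simp
      moreover have "BL \<subseteq> SS u" using BLo outer_SS u by blast
      ultimately show "y \<in> Kc u b0" by (auto simp: Kc_def intro: R_mono[rotated])
    qed
    then show "component (VL - st VL EL u) EL (Kc u b0) \<and> Bt \<subseteq> Kc u b0"
      using b0S by (auto simp: component_def Kc_def SS_def)
  next
    fix K assume K: "component (VL - st VL EL u) EL K \<and> Bt \<subseteq> K"
    then obtain z where z: "z \<in> SS u" "K = Kc u z" by (auto simp: component_def Kc_def SS_def)
    have "b0 \<in> Bt" using b0 by simp
    then have "b0 \<in> Kc u z" using K z by auto
    then show "K = Kc u b0" using Kc_eq[OF z(1)] z by simp
  qed
  have bar: "bar_set VL EL \<phi> v Bt = \<phi> ` Ix b0"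
  proof -
    have "(\<Inter>u\<in>{u \<in> VL. \<phi> u = v}. comp_containing VL EL u Bt) = (\<Inter>u\<in>U. Kc u b0)"
      using cc by (simp add: U_def[symmetric])
    also have "\<dots> = Ix b0"
    proof
      show "(\<Inter>u\<in>U. Kc u b0) \<subseteq> Ix b0"
      proof
        fix w assume w: "w \<in> (\<Inter>u\<in>U. Kc u b0)"
        then have "w \<in> Kc ustar b0" using ustar by blast
        then have "w \<in> VL" using Kc_SS[OF outer_SS[OF ob0 ustar]] SS_VL by blast
        then show "w \<in> Ix b0" using w by (simp add: Ix_def)
      qed
    qed (auto simp: Ix_def)
    finally show ?thesis by (simp add: bar_set_def)
  qed
  show ?thesis
    unfolding bar
  proof (rule liftable_crit[where L = "Lall b0"])
    show "\<And>a b. EL a b \<Longrightarrow> EL b a" by (rule symL)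
    show "\<And>a b. EG a b \<Longrightarrow> EG b a" by (rule symG)
    show "\<And>x. x \<in> VL \<Longrightarrow> \<phi> x \<in> VG" by (rule phiV)
    show "\<And>x y. EL x y \<Longrightarrow> EG (\<phi> x) (\<phi> y)" by (rule phiE)
    show "v \<in> VG" by (rule v)
    show "v \<notin> \<phi> ` Ix b0" using B1[OF ob0] by (auto simp: st_def)
    show "\<And>a b. a \<in> \<phi> ` Ix b0 \<Longrightarrow> b \<in> VG \<Longrightarrow> EG a b \<Longrightarrow> b \<notin> \<phi> ` Ix b0 \<Longrightarrow> b = v \<or> EG v b"
      by (rule B2[OF ob0])
    show "\<forall>op\<in>set (Lall b0). valid_op VL EL op \<and> \<phi> (fst op) = v" by (rule Lall_valid[OF ob0])
  next
    fix w assume w: "w \<in> VL" "\<phi> w \<in> \<phi> ` Ix b0"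
    then have P: "w \<in> Pset b0" by (simp add: Pset_def)
    show "kL (Lall b0) w = 1" using kL_Lall[OF ob0 P_outer[OF ob0 P]] P by simp
  next
    fix w assume w: "w \<in> VL" "\<phi> w \<notin> \<phi> ` Ix b0" "\<phi> w \<noteq> v" "\<not> EG v (\<phi> w)"
    then have ow: "outer w" by (auto simp: outer_def st_iff)
    have "w \<notin> Pset b0" using w by (simp add: Pset_def)
    then show "kL (Lall b0) w = 0" using kL_Lall[OF ob0 ow] by simp
  qed
qed


end
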